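(* Let $j \neq 1$ and let $X \sim \mathcal{N}(\mu_j^*, (\sigma_j^* )^2 I_d)$ (i.e. $X$ comes from the $j$-th component); set $v = X - \mu_j^*$ and $\beta = (R_{j1}^* )^2/(64(\sigma_1^* \vee \sigma_j^* )^2)$. Consider the events $$\mathcal{E}_{j,1} := \{-(R_{j1}^* )^2/5 \le \langle v, \mu_j^* - \mu_1^*\rangle \},$$ $$\mathcal{E}_{j,2} := \{-(R_{j1}^* )^2 / 64 \le \langle v,\Delta_{\mu_1}\rangle \} \cap \{ \langle v,\Delta_{\mu_j}\rangle \le (\sigma_j^* / \sigma_1^* )^2 (R_{j1}^* )^2 / 64 \},$$ $$\mathcal{E}_{j,3} := \left\{d \left(1 - 2\sqrt{\beta/d} \right) \le \|v\|^2/(\sigma_j^* )^2 \le d \left(1 + 2\sqrt{\beta/d} + 2 \beta/d \right) \right\}.$$ If all three events occur, then $w_1(X) \le (\pi_1/\pi_j) \exp (-\beta)$ and $w_1^*(X) \le (\pi_1^* / \pi_j^* ) \exp (-\beta)$. Moreover, $P(\mathcal{E}_{j,1}\cap\mathcal{E}_{j,2}\cap\mathcal{E}_{j,3}) \ge 1 - 5 \exp (-\beta)$.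
   Context: $\mathcal{G}^*$ is a mixture with density $\sum_{l=1}^k \pi_l^* \mathcal{N}(\mu_l^*, (\sigma_l^* )^2 I_d)$ satisfying, for a universal constant $C\ge 64$, $\|\mu_i^* - \mu_l^*\| \ge C (\sigma_i^* \vee \sigma_l^* ) \sqrt{\log k + \log(\rho_\sigma \rho_\pi)}$ for all $i\ne l$, where $\rho_\pi = \max_i \pi_i^*/\min_i \pi_i^*$, $\rho_\sigma = \max_i \sigma_i^*/\min_i \sigma_i^*$. Current estimates $\{(\pi_i,\mu_i,\sigma_i)\}$ satisfy for all $i$: $\|\mu_i - \mu_i^*\| \le \frac{\sigma_i^*}{16}\min_{l\ne i}\frac{\|\mu_i^*-\mu_l^*\|}{\sigma_i^*\vee\sigma_l^*}$, $|\pi_i-\pi_i^*|\le \pi_i^*/2$, $|\sigma_i^2-(\sigma_i^* )^2|\le 0.5(\sigma_i^* )^2/\sqrt d$. $R_{j1}^* = \|\mu_j^*-\mu_1^*\|$, $\Delta_{\mu_i} = \mu_i^* - \mu_i$. The E-step weight is $w_i(X) = \frac{\pi_i \exp(-\|X - \mu_i\|^2/(2 \sigma_i^2) - d \log (\sigma_i^2) / 2)}{\sum_{l=1}^k \pi_l \exp(-\|X - \mu_l\|^2/(2 \sigma_l^2) - d \log (\sigma_l^2) / 2)}$, and $w_i^*$ is the same expression with the true parameters $(\pi_l^*,\mu_l^*,\sigma_l^* )$ in place of the estimates. *)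

theory Defs
  imports "HOL-Probability.Probability"
begin

definition gauss_iso :: "'a::euclidean_space \<Rightarrow> real \<Rightarrow> 'a measure" where
  "gauss_iso mu s = density lborel (\<lambda>x. ennreal
      ((2 * pi * s\<^sup>2) powr (- real DIM('a) / 2) * exp (- (norm (x - mu))\<^sup>2 / (2 * s\<^sup>2))))"

definition estep_weight ::
  "nat \<Rightarrow> (nat \<Rightarrow> real) \<Rightarrow> (nat \<Rightarrow> 'a::euclidean_space) \<Rightarrow> (nat \<Rightarrow> real) \<Rightarrow> nat \<Rightarrow> 'a \<Rightarrow> real" where
  "estep_weight k p m s i x =
     (p i * exp (- (norm (x - m i))\<^sup>2 / (2 * (s i)\<^sup>2) - real DIM('a) * ln ((s i)\<^sup>2) / 2)) /
     (\<Sum>l\<in>{1..k}. p l * exp (- (norm (x - m l))\<^sup>2 / (2 * (s l)\<^sup>2) - real DIM('a) * ln ((s l)\<^sup>2) / 2))"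

end

theory Submission
  imports Defs
begin

lemma gauss_1d:
  fixes s :: real assumes s: "s > 0"
  shows "(\<integral>\<^sup>+y. ennreal (exp (- y\<^sup>2 / (2 * s\<^sup>2))) \<partial>lborel) = ennreal (sqrt (2 * pi * s\<^sup>2))"
proof -
  have pos: "sqrt (2 * pi * s\<^sup>2) > 0" using s by simp
  have "\<And>y. exp (- y\<^sup>2 / (2 * s\<^sup>2)) = sqrt (2 * pi * s\<^sup>2) * normal_density 0 s y"
    using pos s by (simp add: normal_density_def)
  then have "(\<integral>\<^sup>+y. ennreal (exp (- y\<^sup>2 / (2 * s\<^sup>2))) \<partial>lborel)
      = (\<integral>\<^sup>+y. ennreal (sqrt (2 * pi * s\<^sup>2)) * ennreal (normal_density 0 s y) \<partial>lborel)"
    using pos by (simp add: ennreal_mult)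
  also have "\<dots> = ennreal (sqrt (2 * pi * s\<^sup>2)) * (\<integral>\<^sup>+y. ennreal (normal_density 0 s y) \<partial>lborel)"
    by (rule nn_integral_cmult) simp
  also have "(\<integral>\<^sup>+y. ennreal (normal_density 0 s y) \<partial>lborel) = 1"
    using s by (subst nn_integral_eq_integral) (auto intro: integrable_normal_density integral_normal_density)
  finally show ?thesis by simp
qed

lemma norm_sq_basis: "(norm (x::'a::euclidean_space))\<^sup>2 = (\<Sum>b\<in>Basis. (x \<bullet> b)\<^sup>2)"
  unfolding power2_norm_eq_inner by (subst euclidean_inner) (simp add: power2_eq_square)

lemma gauss_int0:
  fixes s :: real assumes s: "s > 0"
  shows "(\<integral>\<^sup>+x. ennreal (exp (- (norm x)\<^sup>2 / (2 * s\<^sup>2))) \<partial>(lborel::'a::euclidean_space measure))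
     = ennreal ((2 * pi * s\<^sup>2) powr (real DIM('a) / 2))"
proof -
  have eq: "ennreal (exp (- (norm x)\<^sup>2 / (2 * s\<^sup>2))) = (\<Prod>b\<in>Basis. ennreal (exp (- (x \<bullet> b)\<^sup>2 / (2 * s\<^sup>2))))" for x :: 'a
  proof -
    have "- (norm x)\<^sup>2 / (2 * s\<^sup>2) = (\<Sum>b\<in>Basis. - (x \<bullet> b)\<^sup>2 / (2 * s\<^sup>2))"
      by (simp add: norm_sq_basis sum_divide_distrib sum_negf)
    then have "exp (- (norm x)\<^sup>2 / (2 * s\<^sup>2)) = (\<Prod>b\<in>Basis. exp (- (x \<bullet> b)\<^sup>2 / (2 * s\<^sup>2)))"
      by (simp add: exp_sum)
    then show ?thesis by (simp add: prod_ennreal)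
  qed
  have "(\<integral>\<^sup>+x. ennreal (exp (- (norm x)\<^sup>2 / (2 * s\<^sup>2))) \<partial>(lborel::'a measure))
     = (\<integral>\<^sup>+x. (\<Prod>b\<in>Basis. ennreal (exp (- (x \<bullet> b)\<^sup>2 / (2 * s\<^sup>2)))) \<partial>(lborel::'a measure))"
    by (simp only: eq)
  also have "\<dots> = (\<Prod>b\<in>(Basis::'a set). (\<integral>\<^sup>+y. ennreal (exp (- y\<^sup>2 / (2 * s\<^sup>2))) \<partial>lborel))"
    by (rule nn_integral_lborel_prod[where f="\<lambda>b y. ennreal (exp (- y\<^sup>2 / (2 * s\<^sup>2)))"]) auto
  also have "\<dots> = ennreal (sqrt (2 * pi * s\<^sup>2) ^ DIM('a))"
    apply (simp only: gauss_1d[OF s] prod_constant) by (rule ennreal_power) simp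
  also have "sqrt (2 * pi * s\<^sup>2) ^ DIM('a) = (2 * pi * s\<^sup>2) powr (real DIM('a) / 2)"
  proof -
    have a: "2 * pi * s\<^sup>2 > 0" using s by simp
    have "sqrt (2 * pi * s\<^sup>2) ^ DIM('a) = sqrt (2 * pi * s\<^sup>2) powr real DIM('a)"
      using a by (simp add: powr_realpow)
    also have "\<dots> = ((2 * pi * s\<^sup>2) powr (1/2)) powr real DIM('a)"
      using a by (simp add: powr_half_sqrt)
    also have "\<dots> = (2 * pi * s\<^sup>2) powr (real DIM('a) / 2)"
      by (simp add: powr_powr)
    finally show ?thesis .
  qed
  finally show ?thesis .
qed

lemma gauss_int_shift:
  fixes s :: real and w :: "'a::euclidean_space" assumes s: "s > 0"
  shows "(\<integral>\<^sup>+x. ennreal (exp (- (norm (x - w))\<^sup>2 / (2 * s\<^sup>2))) \<partial>(lborel::'a measure))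
     = ennreal ((2 * pi * s\<^sup>2) powr (real DIM('a) / 2))"
proof -
  have "(\<integral>\<^sup>+x. ennreal (exp (- (norm (x - w))\<^sup>2 / (2 * s\<^sup>2))) \<partial>(lborel::'a measure))
     = (\<integral>\<^sup>+x. ennreal (exp (- (norm (x - w))\<^sup>2 / (2 * s\<^sup>2))) \<partial>(distr lborel borel ((+) w)))"
    by (simp add: lborel_distr_plus)
  also have "\<dots> = (\<integral>\<^sup>+x. ennreal (exp (- (norm ((w + x) - w))\<^sup>2 / (2 * s\<^sup>2))) \<partial>(lborel::'a measure))"
    by (subst nn_integral_distr) auto
  also have "\<dots> = (\<integral>\<^sup>+x. ennreal (exp (- (norm x)\<^sup>2 / (2 * s\<^sup>2))) \<partial>(lborel::'a measure))"
    by simp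
  finally show ?thesis using gauss_int0[OF s] by simp
qed

definition gcst :: "real \<Rightarrow> real \<Rightarrow> real" where
  "gcst d s = (2 * pi * s\<^sup>2) powr (- d / 2)"

lemma gcst_pos: "s > 0 \<Longrightarrow> gcst d s > 0"
  by (simp add: gcst_def)

lemma gcst_inv: "s > 0 \<Longrightarrow> gcst d s * (2 * pi * s\<^sup>2) powr (d / 2) = 1"
  using powr_add[of "2 * pi * s^2" "-(d/2)" "d/2", symmetric] unfolding gcst_def minus_divide_left by simp

lemma gauss_nn:
  fixes mu :: "'a::euclidean_space"
  assumes f[measurable]: "f \<in> borel_measurable borel"
  shows "(\<integral>\<^sup>+x. f x \<partial>gauss_iso mu s) =
     (\<integral>\<^sup>+x. ennreal (gcst (real DIM('a)) s * exp (- (norm (x - mu))\<^sup>2 / (2 * s\<^sup>2))) * f x \<partial>lborel)"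
  unfolding gauss_iso_def gcst_def
  by (subst nn_integral_density) auto

lemma gauss_total:
  fixes mu :: "'a::euclidean_space" assumes s: "s > 0"
  shows "(\<integral>\<^sup>+x. ennreal (gcst (real DIM('a)) s * exp (- (norm (x - w))\<^sup>2 / (2 * s\<^sup>2))) \<partial>(lborel::'a measure)) = 1"
proof -
  have "(\<integral>\<^sup>+x. ennreal (gcst (real DIM('a)) s * exp (- (norm (x - w))\<^sup>2 / (2 * s\<^sup>2))) \<partial>(lborel::'a measure))
      = (\<integral>\<^sup>+x. ennreal (gcst (real DIM('a)) s) * ennreal (exp (- (norm (x - w))\<^sup>2 / (2 * s\<^sup>2))) \<partial>(lborel::'a measure))"
    apply (rule nn_integral_cong) apply (rule ennreal_mult) using gcst_pos[OF s] by (auto simp: less_imp_le)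
  also have "\<dots> = ennreal (gcst (real DIM('a)) s) * (\<integral>\<^sup>+x. ennreal (exp (- (norm (x - w))\<^sup>2 / (2 * s\<^sup>2))) \<partial>(lborel::'a measure))"
    by (rule nn_integral_cmult) simp
  also have "\<dots> = ennreal (gcst (real DIM('a)) s) * ennreal ((2 * pi * s\<^sup>2) powr (real DIM('a) / 2))"
    by (simp only: gauss_int_shift[OF s])
  also have "\<dots> = ennreal (gcst (real DIM('a)) s * (2 * pi * s\<^sup>2) powr (real DIM('a) / 2))"
    by (rule ennreal_mult[symmetric]) (use less_imp_le[OF gcst_pos[OF s]] in auto)
  also have "\<dots> = 1"
    using gcst_inv[OF s] by simp
  finally show ?thesis .
qed

lemma gauss_prob:
  fixes mu :: "'a::euclidean_space" assumes s: "s > 0"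
  shows "prob_space (gauss_iso mu s)"
proof
  have "emeasure (gauss_iso mu s) (space (gauss_iso mu s)) = (\<integral>\<^sup>+x. 1 \<partial>gauss_iso mu s)"
    by (simp only: nn_integral_const mult_1)
  also have "\<dots> = (\<integral>\<^sup>+x. ennreal (gcst (real DIM('a)) s * exp (- (norm (x - mu))\<^sup>2 / (2 * s\<^sup>2))) * 1 \<partial>lborel)"
    by (rule gauss_nn) simp
  also have "\<dots> = 1"
    using gauss_total[OF s, of mu] by simp
  finally show "emeasure (gauss_iso mu s) (space (gauss_iso mu s)) = 1" .
qed

lemma ln_up_aux0:
  fixes z :: real assumes z: "1 \<le> z"
  shows "ln z \<le> z / 2 - 1 / (2 * z)"
proof -
  let ?f = "\<lambda>x::real. x / 2 - 1 / (2 * x) - ln x"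
  have "?f 1 \<le> ?f z"
  proof (rule DERIV_nonneg_imp_nondecreasing[OF z])
    fix x :: real assume x: "1 \<le> x" "x \<le> z"
    have "DERIV ?f x :> (1/2 + 1 / (2 * x\<^sup>2) - 1 / x)"
      using x by (auto intro!: derivative_eq_intros simp: power2_eq_square field_simps)
    moreover have "1/2 + 1 / (2 * x\<^sup>2) - 1 / x = (1 - 1 / x)\<^sup>2 / 2"
      using x by (simp add: power2_eq_square field_simps)
    ultimately show "\<exists>y. DERIV ?f x :> y \<and> 0 \<le> y" by auto
  qed
  then show ?thesis by simp
qed
lemma ln_up:
  fixes u :: real assumes u: "u \<ge> 0"
  shows "ln (1 + u) \<le> (1 + u) / 2 - 1 / (2 * (1 + u))"
  using ln_up_aux0[of "1 + u"] u by simp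

lemma ln_low:
  fixes u :: real assumes u: "u \<ge> 0"
  shows "u - u\<^sup>2 / 2 \<le> ln (1 + u)"
proof -
  let ?f = "\<lambda>x::real. ln (1 + x) - x + x\<^sup>2 / 2"
  have "?f 0 \<le> ?f u"
  proof (rule DERIV_nonneg_imp_nondecreasing[OF u])
    fix x :: real assume x: "0 \<le> x" "x \<le> u"
    have p: "1 + x > 0" using x by simp
    have "DERIV ?f x :> (1 / (1 + x) - 1 + x)"
      using p by (auto intro!: derivative_eq_intros simp: field_simps)
    moreover have "1 / (1 + x) - 1 + x = x\<^sup>2 / (1 + x)"
      using p by (simp add: power2_eq_square field_simps)
    ultimately show "\<exists>y. DERIV ?f x :> y \<and> 0 \<le> y" using x by auto
  qed
  then show ?thesis by simp
qed

lemma norm_diff_scale_sq: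
  fixes y u :: "'a::euclidean_space"
  shows "(norm (y - a *\<^sub>R u))\<^sup>2 = (norm y)\<^sup>2 - 2 * a * inner y u + a\<^sup>2 * (norm u)\<^sup>2"
  unfolding power2_norm_eq_inner by (simp add: inner_diff_left inner_diff_right inner_commute algebra_simps power2_eq_square)

lemma gauss_mgf_lin:
  fixes mu u :: "'a::euclidean_space" assumes s: "s > 0"
  shows "(\<integral>\<^sup>+x. ennreal (exp (l * inner (x - mu) u)) \<partial>gauss_iso mu s) = ennreal (exp (l\<^sup>2 * s\<^sup>2 * (norm u)\<^sup>2 / 2))"
proof -
  define w where "w = mu + (l * s\<^sup>2) *\<^sub>R u"
  have pt: "gcst (real DIM('a)) s * exp (- (norm (x - mu))\<^sup>2 / (2 * s\<^sup>2)) * exp (l * inner (x - mu) u)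
     = exp (l\<^sup>2 * s\<^sup>2 * (norm u)\<^sup>2 / 2) * (gcst (real DIM('a)) s * exp (- (norm (x - w))\<^sup>2 / (2 * s\<^sup>2)))" for x
  proof -
    have e: "x - w = (x - mu) - (l * s\<^sup>2) *\<^sub>R u" unfolding w_def by (simp add: algebra_simps)
    have "(norm (x - w))\<^sup>2 = (norm (x - mu))\<^sup>2 - 2 * (l * s\<^sup>2) * inner (x - mu) u + (l * s\<^sup>2)\<^sup>2 * (norm u)\<^sup>2"
      unfolding e by (rule norm_diff_scale_sq)
    then have "- (norm (x - mu))\<^sup>2 / (2 * s\<^sup>2) + l * inner (x - mu) u = l\<^sup>2 * s\<^sup>2 * (norm u)\<^sup>2 / 2 + - (norm (x - w))\<^sup>2 / (2 * s\<^sup>2)"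
      using s by (simp add: field_simps power2_eq_square)
    then show ?thesis by (simp add: exp_add[symmetric] algebra_simps)
  qed
  have "(\<integral>\<^sup>+x. ennreal (exp (l * inner (x - mu) u)) \<partial>gauss_iso mu s)
     = (\<integral>\<^sup>+x. ennreal (gcst (real DIM('a)) s * exp (- (norm (x - mu))\<^sup>2 / (2 * s\<^sup>2))) * ennreal (exp (l * inner (x - mu) u)) \<partial>lborel)"
    by (rule gauss_nn) simp
  also have "\<dots> = (\<integral>\<^sup>+x. ennreal (exp (l\<^sup>2 * s\<^sup>2 * (norm u)\<^sup>2 / 2)) * ennreal (gcst (real DIM('a)) s * exp (- (norm (x - w))\<^sup>2 / (2 * s\<^sup>2))) \<partial>lborel)"
  proof (rule nn_integral_cong)
    fix x :: 'a
    have "ennreal (gcst (real DIM('a)) s * exp (- (norm (x - mu))\<^sup>2 / (2 * s\<^sup>2))) * ennreal (exp (l * inner (x - mu) u))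
      = ennreal (gcst (real DIM('a)) s * exp (- (norm (x - mu))\<^sup>2 / (2 * s\<^sup>2)) * exp (l * inner (x - mu) u))"
      by (rule ennreal_mult[symmetric]) (use less_imp_le[OF gcst_pos[OF s]] in auto)
    also have "\<dots> = ennreal (exp (l\<^sup>2 * s\<^sup>2 * (norm u)\<^sup>2 / 2) * (gcst (real DIM('a)) s * exp (- (norm (x - w))\<^sup>2 / (2 * s\<^sup>2))))"
      by (simp only: pt)
    also have "\<dots> = ennreal (exp (l\<^sup>2 * s\<^sup>2 * (norm u)\<^sup>2 / 2)) * ennreal (gcst (real DIM('a)) s * exp (- (norm (x - w))\<^sup>2 / (2 * s\<^sup>2)))"
      by (rule ennreal_mult) (use less_imp_le[OF gcst_pos[OF s]] in auto)
    finally show "ennreal (gcst (real DIM('a)) s * exp (- (norm (x - mu))\<^sup>2 / (2 * s\<^sup>2))) * ennreal (exp (l * inner (x - mu) u))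
      = ennreal (exp (l\<^sup>2 * s\<^sup>2 * (norm u)\<^sup>2 / 2)) * ennreal (gcst (real DIM('a)) s * exp (- (norm (x - w))\<^sup>2 / (2 * s\<^sup>2)))" .
  qed
  also have "\<dots> = ennreal (exp (l\<^sup>2 * s\<^sup>2 * (norm u)\<^sup>2 / 2)) * (\<integral>\<^sup>+x. ennreal (gcst (real DIM('a)) s * exp (- (norm (x - w))\<^sup>2 / (2 * s\<^sup>2))) \<partial>lborel)"
    by (rule nn_integral_cmult) simp
  also have "\<dots> = ennreal (exp (l\<^sup>2 * s\<^sup>2 * (norm u)\<^sup>2 / 2))"
    by (simp only: gauss_total[OF s] mult_1_right)
  finally show ?thesis .
qed


lemma gauss_mgf_quad:
  fixes mu :: "'a::euclidean_space" assumes s: "s > 0" and l: "2 * l * s\<^sup>2 < 1"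
  shows "(\<integral>\<^sup>+x. ennreal (exp (l * (norm (x - mu))\<^sup>2)) \<partial>gauss_iso mu s) = ennreal ((1 - 2 * l * s\<^sup>2) powr (- real DIM('a) / 2))"
proof -
  define r where "r = 1 - 2 * l * s\<^sup>2"
  have r: "r > 0" using l by (simp add: r_def)
  define s' where "s' = s / sqrt r"
  have s': "s' > 0" using s r by (simp add: s'_def)
  have s's: "s'\<^sup>2 = s\<^sup>2 / r" using r by (simp add: s'_def power_divide)
  define D where "D = real DIM('a)"
  have gc: "gcst D s = r powr (- D / 2) * gcst D s'"
  proof -
    have "2 * pi * s\<^sup>2 = r * (2 * pi * s'\<^sup>2)" using r by (simp add: s's)
    then show ?thesis unfolding gcst_def using r s' by (simp add: powr_mult)
  qed
  have pt: "gcst D s * exp (- (norm (x - mu))\<^sup>2 / (2 * s\<^sup>2)) * exp (l * (norm (x - mu))\<^sup>2)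
     = r powr (- D / 2) * (gcst D s' * exp (- (norm (x - mu))\<^sup>2 / (2 * s'\<^sup>2)))" for x
  proof -
    have "- (norm (x - mu))\<^sup>2 / (2 * s\<^sup>2) + l * (norm (x - mu))\<^sup>2 = - (norm (x - mu))\<^sup>2 / (2 * s'\<^sup>2)"
      using s r unfolding s's r_def by (simp add: field_simps)
    then have "exp (- (norm (x - mu))\<^sup>2 / (2 * s\<^sup>2)) * exp (l * (norm (x - mu))\<^sup>2) = exp (- (norm (x - mu))\<^sup>2 / (2 * s'\<^sup>2))"
      by (simp add: exp_add[symmetric])
    then show ?thesis unfolding gc by (simp add: algebra_simps)
  qed
  have "(\<integral>\<^sup>+x. ennreal (exp (l * (norm (x - mu))\<^sup>2)) \<partial>gauss_iso mu s)
     = (\<integral>\<^sup>+x. ennreal (gcst D s * exp (- (norm (x - mu))\<^sup>2 / (2 * s\<^sup>2))) * ennreal (exp (l * (norm (x - mu))\<^sup>2)) \<partial>lborel)"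
    unfolding D_def by (rule gauss_nn) simp
  also have "\<dots> = (\<integral>\<^sup>+x. ennreal (r powr (- D / 2)) * ennreal (gcst D s' * exp (- (norm (x - mu))\<^sup>2 / (2 * s'\<^sup>2))) \<partial>lborel)"
  proof (rule nn_integral_cong)
    fix x :: 'a
    have "ennreal (gcst D s * exp (- (norm (x - mu))\<^sup>2 / (2 * s\<^sup>2))) * ennreal (exp (l * (norm (x - mu))\<^sup>2))
      = ennreal (gcst D s * exp (- (norm (x - mu))\<^sup>2 / (2 * s\<^sup>2)) * exp (l * (norm (x - mu))\<^sup>2))"
      by (rule ennreal_mult[symmetric]) (use less_imp_le[OF gcst_pos[OF s]] in auto)
    also have "\<dots> = ennreal (r powr (- D / 2) * (gcst D s' * exp (- (norm (x - mu))\<^sup>2 / (2 * s'\<^sup>2))))"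
      by (simp only: pt)
    also have "\<dots> = ennreal (r powr (- D / 2)) * ennreal (gcst D s' * exp (- (norm (x - mu))\<^sup>2 / (2 * s'\<^sup>2)))"
      by (rule ennreal_mult) (use less_imp_le[OF gcst_pos[OF s']] in auto)
    finally show "ennreal (gcst D s * exp (- (norm (x - mu))\<^sup>2 / (2 * s\<^sup>2))) * ennreal (exp (l * (norm (x - mu))\<^sup>2))
      = ennreal (r powr (- D / 2)) * ennreal (gcst D s' * exp (- (norm (x - mu))\<^sup>2 / (2 * s'\<^sup>2)))" .
  qed
  also have "\<dots> = ennreal (r powr (- D / 2)) * (\<integral>\<^sup>+x. ennreal (gcst D s' * exp (- (norm (x - mu))\<^sup>2 / (2 * s'\<^sup>2))) \<partial>(lborel::'a measure))"
    by (rule nn_integral_cmult) simp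
  also have "\<dots> = ennreal (r powr (- D / 2))"
    unfolding D_def by (simp only: gauss_total[OF s'] mult_1_right)
  finally show ?thesis unfolding r_def D_def .
qed

lemma chernoff:
  assumes f[measurable]: "f \<in> borel_measurable M" and l: "l \<ge> 0"
  shows "emeasure M {x\<in>space M. t \<le> f x} \<le> ennreal (exp (- l * t)) * (\<integral>\<^sup>+x. ennreal (exp (l * f x)) \<partial>M)"
proof -
  have "emeasure M {x\<in>space M. t \<le> f x} = (\<integral>\<^sup>+x. indicator {x\<in>space M. t \<le> f x} x \<partial>M)"
    by (rule nn_integral_indicator[symmetric]) measurable
  also have "\<dots> \<le> (\<integral>\<^sup>+x. ennreal (exp (- l * t)) * ennreal (exp (l * f x)) \<partial>M)"
  proof (rule nn_integral_mono)
    fix x assume "x \<in> space M"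
    show "indicator {x\<in>space M. t \<le> f x} x \<le> ennreal (exp (- l * t)) * ennreal (exp (l * f x))"
    proof (cases "t \<le> f x")
      case True
      have "l * t \<le> l * f x" using True l by (rule mult_left_mono)
      then have "0 \<le> - l * t + l * f x" by simp
      then have "1 \<le> exp (- l * t + l * f x)" by simp
      then have "1 \<le> exp (- l * t) * exp (l * f x)" by (simp only: exp_add)
      then have "ennreal 1 \<le> ennreal (exp (- l * t) * exp (l * f x))" by (rule ennreal_leI)
      then show ?thesis by (simp add: ennreal_mult[symmetric] indicator_def)
    qed (simp add: indicator_def)
  qed
  also have "\<dots> = ennreal (exp (- l * t)) * (\<integral>\<^sup>+x. ennreal (exp (l * f x)) \<partial>M)"
    by (rule nn_integral_cmult) simp
  finally show ?thesis .
qed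

lemma space_gauss[simp]: "space (gauss_iso mu s) = UNIV"
  by (simp add: gauss_iso_def)

lemma sets_gauss[simp, measurable_cong]: "sets (gauss_iso mu s) = sets borel"
  by (simp add: gauss_iso_def)

lemma emeasure_to_measure:
  assumes "finite_measure M" "emeasure M A \<le> ennreal b" "b \<ge> 0"
  shows "measure M A \<le> b"
  using assms by (metis finite_measure.emeasure_eq_measure ennreal_le_iff)


lemma P_lin:
  fixes mu u :: "'a::euclidean_space"
  assumes s: "s > 0" and U: "U > 0" and nu: "norm u \<le> U" and t: "t > 0"
  shows "measure (gauss_iso mu s) {x. t \<le> inner (x - mu) u} \<le> exp (- t\<^sup>2 / (2 * s\<^sup>2 * U\<^sup>2))"
proof -
  interpret prob_space "gauss_iso mu s" by (rule gauss_prob[OF s])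
  define l where "l = t / (s\<^sup>2 * U\<^sup>2)"
  have l: "l \<ge> 0" using s U t by (simp add: l_def)
  have "emeasure (gauss_iso mu s) {x\<in>space (gauss_iso mu s). t \<le> inner (x - mu) u}
     \<le> ennreal (exp (- l * t)) * (\<integral>\<^sup>+x. ennreal (exp (l * inner (x - mu) u)) \<partial>gauss_iso mu s)"
    by (rule chernoff[OF _ l]) simp
  also have "\<dots> = ennreal (exp (- l * t)) * ennreal (exp (l\<^sup>2 * s\<^sup>2 * (norm u)\<^sup>2 / 2))"
    by (simp only: gauss_mgf_lin[OF s])
  also have "\<dots> = ennreal (exp (- l * t) * exp (l\<^sup>2 * s\<^sup>2 * (norm u)\<^sup>2 / 2))"
    by (simp add: ennreal_mult)
  also have "\<dots> \<le> ennreal (exp (- t\<^sup>2 / (2 * s\<^sup>2 * U\<^sup>2)))"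
  proof (rule ennreal_leI)
    have "(norm u)\<^sup>2 \<le> U\<^sup>2" using nu by (simp add: power_mono)
    then have "l\<^sup>2 * s\<^sup>2 * (norm u)\<^sup>2 / 2 \<le> l\<^sup>2 * s\<^sup>2 * U\<^sup>2 / 2"
      by (simp add: mult_left_mono divide_right_mono)
    moreover have "- l * t + l\<^sup>2 * s\<^sup>2 * U\<^sup>2 / 2 = - t\<^sup>2 / (2 * s\<^sup>2 * U\<^sup>2)"
      using s U unfolding l_def by (simp add: field_simps power2_eq_square)
    ultimately have "- l * t + l\<^sup>2 * s\<^sup>2 * (norm u)\<^sup>2 / 2 \<le> - t\<^sup>2 / (2 * s\<^sup>2 * U\<^sup>2)" by linarith
    then show "exp (- l * t) * exp (l\<^sup>2 * s\<^sup>2 * (norm u)\<^sup>2 / 2) \<le> exp (- t\<^sup>2 / (2 * s\<^sup>2 * U\<^sup>2))"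
      by (simp add: exp_add[symmetric])
  qed
  finally show ?thesis
    by (intro emeasure_to_measure) (auto simp: finite_measure_axioms)
qed

lemma P_up:
  fixes mu :: "'a::euclidean_space"
  assumes s: "s > 0" and q: "q \<ge> 0"
  shows "measure (gauss_iso mu s) {x. real DIM('a) * (1 + 2 * q + 2 * q\<^sup>2) < (norm (x - mu))\<^sup>2 / s\<^sup>2}
     \<le> exp (- real DIM('a) * q\<^sup>2)"
proof -
  interpret prob_space "gauss_iso mu s" by (rule gauss_prob[OF s])
  define d where "d = real DIM('a)"
  define lam where "lam = q / (1 + 2 * q)"
  define l where "l = lam / s\<^sup>2"
  define t where "t = s\<^sup>2 * d * (1 + 2 * q + 2 * q\<^sup>2)"
  have lam0: "lam \<ge> 0" using q by (simp add: lam_def)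
  have l: "l \<ge> 0" using lam0 s by (simp add: l_def)
  have ls: "2 * l * s\<^sup>2 = 2 * lam" using s by (simp add: l_def)
  have lam1: "1 - 2 * lam = 1 / (1 + 2 * q)" using q by (simp add: lam_def field_simps)
  have sub: "{x. d * (1 + 2 * q + 2 * q\<^sup>2) < (norm (x - mu))\<^sup>2 / s\<^sup>2} \<subseteq> {x\<in>space (gauss_iso mu s). t \<le> (norm (x - mu))\<^sup>2}"
    using s by (auto simp: t_def field_simps)
  have "emeasure (gauss_iso mu s) {x. d * (1 + 2 * q + 2 * q\<^sup>2) < (norm (x - mu))\<^sup>2 / s\<^sup>2}
      \<le> emeasure (gauss_iso mu s) {x\<in>space (gauss_iso mu s). t \<le> (norm (x - mu))\<^sup>2}"
    by (rule emeasure_mono[OF sub]) simp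
  also have "\<dots> \<le> ennreal (exp (- l * t)) * (\<integral>\<^sup>+x. ennreal (exp (l * (norm (x - mu))\<^sup>2)) \<partial>gauss_iso mu s)"
    by (rule chernoff[OF _ l]) simp
  also have "\<dots> = ennreal (exp (- l * t)) * ennreal ((1 - 2 * l * s\<^sup>2) powr (- d / 2))"
  proof -
    have "2 * lam < 1" unfolding lam_def using q by (simp add: divide_simps)
    then have "2 * l * s\<^sup>2 < 1" using ls by simp
    then show ?thesis unfolding d_def by (simp only: gauss_mgf_quad[OF s])
  qed
  also have "\<dots> = ennreal (exp (- l * t) * (1 - 2 * l * s\<^sup>2) powr (- d / 2))"
    by (simp add: ennreal_mult)
  also have "\<dots> \<le> ennreal (exp (- d * q\<^sup>2))"
  proof (rule ennreal_leI)
    have p: "1 + 2 * q > 0" using q by simp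
    have "(1 - 2 * l * s\<^sup>2) powr (- d / 2) = (1 + 2 * q) powr (d / 2)"
      unfolding ls lam1 using p by (simp add: powr_divide powr_minus_divide)
    also have "\<dots> = exp (d / 2 * ln (1 + 2 * q))"
      using p by (simp add: powr_def)
    finally have e1: "(1 - 2 * l * s\<^sup>2) powr (- d / 2) = exp (d / 2 * ln (1 + 2 * q))" .
    have lnb: "ln (1 + 2 * q) \<le> (1 + 2 * q) / 2 - 1 / (2 * (1 + 2 * q))"
      using ln_up[of "2 * q"] q by simp
    have d0: "d \<ge> 0" by (simp add: d_def)
    have "d / 2 * ln (1 + 2 * q) \<le> d / 2 * ((1 + 2 * q) / 2 - 1 / (2 * (1 + 2 * q)))"
      using lnb d0 by (simp add: mult_left_mono)
    also have "d / 2 * ((1 + 2 * q) / 2 - 1 / (2 * (1 + 2 * q))) = l * t - d * q\<^sup>2"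
    proof -
      have "l * t = lam * (d * (1 + 2 * q + 2 * q\<^sup>2))" using s unfolding l_def t_def by (simp add: field_simps)
      moreover have "d / 2 * ((1 + 2 * q) / 2 - 1 / (2 * (1 + 2 * q))) = lam * (d * (1 + 2 * q + 2 * q\<^sup>2)) - d * q\<^sup>2"
        using p unfolding lam_def by (simp add: field_simps power2_eq_square)
      ultimately show ?thesis by simp
    qed
    finally have "- l * t + d / 2 * ln (1 + 2 * q) \<le> - d * q\<^sup>2" by simp
    then show "exp (- l * t) * (1 - 2 * l * s\<^sup>2) powr (- d / 2) \<le> exp (- d * q\<^sup>2)"
      unfolding e1 by (simp add: exp_add[symmetric])
  qed
  finally show ?thesis unfolding d_def
    by (intro emeasure_to_measure) (auto simp: finite_measure_axioms)
qed

lemma P_low: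
  fixes mu :: "'a::euclidean_space"
  assumes s: "s > 0" and q: "q \<ge> 0"
  shows "measure (gauss_iso mu s) {x. (norm (x - mu))\<^sup>2 / s\<^sup>2 < real DIM('a) * (1 - 2 * q)}
     \<le> exp (- real DIM('a) * q\<^sup>2)"
proof -
  interpret prob_space "gauss_iso mu s" by (rule gauss_prob[OF s])
  define d where "d = real DIM('a)"
  define l where "l = q / s\<^sup>2"
  define t where "t = - s\<^sup>2 * d * (1 - 2 * q)"
  have l: "l \<ge> 0" using q s by (simp add: l_def)
  have sub: "{x. (norm (x - mu))\<^sup>2 / s\<^sup>2 < d * (1 - 2 * q)} \<subseteq> {x\<in>space (gauss_iso mu s). t \<le> - (norm (x - mu))\<^sup>2}"
    using s by (auto simp: t_def field_simps)
  have "emeasure (gauss_iso mu s) {x. (norm (x - mu))\<^sup>2 / s\<^sup>2 < d * (1 - 2 * q)}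
      \<le> emeasure (gauss_iso mu s) {x\<in>space (gauss_iso mu s). t \<le> - (norm (x - mu))\<^sup>2}"
    by (rule emeasure_mono[OF sub]) simp
  also have "\<dots> \<le> ennreal (exp (- l * t)) * (\<integral>\<^sup>+x. ennreal (exp (l * - (norm (x - mu))\<^sup>2)) \<partial>gauss_iso mu s)"
    by (rule chernoff[OF _ l]) simp
  also have "(\<integral>\<^sup>+x. ennreal (exp (l * - (norm (x - mu))\<^sup>2)) \<partial>gauss_iso mu s)
      = (\<integral>\<^sup>+x. ennreal (exp ((- l) * (norm (x - mu))\<^sup>2)) \<partial>gauss_iso mu s)"
    by simp
  also have "\<dots> = ennreal ((1 - 2 * (- l) * s\<^sup>2) powr (- d / 2))"
    unfolding d_def by (rule gauss_mgf_quad[OF s]) (use l s in \<open>simp add: mult_nonneg_nonneg\<close>, smt (verit) mult_nonneg_nonneg zero_le_power2)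
  also have "ennreal (exp (- l * t)) * \<dots> = ennreal (exp (- l * t) * (1 - 2 * (- l) * s\<^sup>2) powr (- d / 2))"
    by (simp add: ennreal_mult)
  also have "\<dots> \<le> ennreal (exp (- d * q\<^sup>2))"
  proof (rule ennreal_leI)
    have p: "1 + 2 * q > 0" using q by simp
    have ls: "1 - 2 * (- l) * s\<^sup>2 = 1 + 2 * q" using s by (simp add: l_def)
    have e1: "(1 - 2 * (- l) * s\<^sup>2) powr (- d / 2) = exp (- d / 2 * ln (1 + 2 * q))"
      unfolding ls using p by (simp add: powr_def)
    have lnb: "2 * q - (2 * q)\<^sup>2 / 2 \<le> ln (1 + 2 * q)"
      using ln_low[of "2 * q"] q by simp
    have d0: "d \<ge> 0" by (simp add: d_def)
    have "d / 2 * (2 * q - (2 * q)\<^sup>2 / 2) \<le> d / 2 * ln (1 + 2 * q)"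
      using lnb d0 by (simp add: mult_left_mono)
    moreover have "- l * t = d * q - 2 * d * q\<^sup>2"
      using s unfolding l_def t_def by (simp add: field_simps power2_eq_square)
    ultimately have "- l * t + - d / 2 * ln (1 + 2 * q) \<le> - d * q\<^sup>2"
      by (simp add: power2_eq_square field_simps)
    then show "exp (- l * t) * (1 - 2 * (- l) * s\<^sup>2) powr (- d / 2) \<le> exp (- d * q\<^sup>2)"
      unfolding e1 by (simp add: exp_add[symmetric])
  qed
  finally show ?thesis unfolding d_def
    by (intro emeasure_to_measure) (auto simp: finite_measure_axioms)
qed


lemma ln_1m:
  fixes u :: real assumes u: "0 \<le> u" "u < 1"
  shows "ln (1 - u) \<le> - u - u\<^sup>2 / 2"
proof -
  let ?f = "\<lambda>x::real. - x - x\<^sup>2 / 2 - ln (1 - x)"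
  have "?f 0 \<le> ?f u"
  proof (rule DERIV_nonneg_imp_nondecreasing[OF u(1)])
    fix x :: real assume x: "0 \<le> x" "x \<le> u"
    have p: "1 - x > 0" using x u by simp
    have "DERIV ?f x :> (- 1 - x + 1 / (1 - x))"
      using p by (auto intro!: derivative_eq_intros simp: field_simps)
    moreover have "- 1 - x + 1 / (1 - x) = x\<^sup>2 / (1 - x)"
      using p by (simp add: power2_eq_square field_simps)
    ultimately show "\<exists>y. DERIV ?f x :> y \<and> 0 \<le> y" using x p by auto
  qed
  then show ?thesis by simp
qed


lemma core_ineq:
  fixes d sd sb e SA Sj sA sj MM RR a YA Yj :: real
  assumes sd1: "sd \<ge> 1" and dsd: "d = sd\<^sup>2" and e: "e = 1 / (2 * sd)"
    and SA: "SA > 0" and Sj: "Sj > 0" and M1: "SA \<le> MM" and Mj: "Sj \<le> MM"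
    and s1c: "\<bar>sA - SA\<bar> \<le> e * SA" and sjc: "\<bar>sj - Sj\<bar> \<le> e * Sj"
    and RR: "RR = 64 * sb\<^sup>2 * MM" and sb4: "sb \<ge> 4"
    and a0: "0 \<le> a" and alo: "Sj * (d - 2 * sb * sd) \<le> a" and ahi: "a \<le> Sj * (d + 2 * sb * sd + 2 * sb\<^sup>2)"
    and YA: "a + 2 * RR / 5 \<le> YA" and Yj: "Yj \<le> a + (Sj / SA) * RR / 32 + Sj * RR / (256 * MM)"
  shows "sb\<^sup>2 \<le> YA / (2 * sA) + d * ln sA / 2 - Yj / (2 * sj) - d * ln sj / 2"
proof -
  have e0: "e > 0" using e sd1 by simp
  have e2: "e \<le> 1/2"
  proof -
    have "e * 2 \<le> e * (2 * sd)" using e0 sd1 by (intro mult_left_mono) auto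
    also have "e * (2 * sd) = 1" using e sd1 by simp
    finally show ?thesis by simp
  qed
  have ed: "e * d = sd / 2" using e dsd sd1 by (simp add: field_simps power2_eq_square)
  have eS1: "e * SA \<le> SA / 2" using mult_right_mono[OF e2, of SA] SA by simp
  have eSj: "e * Sj \<le> Sj / 2" using mult_right_mono[OF e2, of Sj] Sj by simp
  have s1lo: "SA / 2 \<le> sA" and s1hi: "sA \<le> 3 / 2 * SA" using s1c eS1 by (auto simp: abs_le_iff)
  have sjlo: "(1 - e) * Sj \<le> sj" and sjhi: "sj \<le> (1 + e) * Sj" using sjc by (auto simp: abs_le_iff algebra_simps)
  have sjlo2: "Sj / 2 \<le> sj" using sjc eSj by (auto simp: abs_le_iff)
  have s1p: "sA > 0" using s1lo SA by simp
  have sjp: "sj > 0" using sjlo2 Sj by simp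
  have M2p: "MM > 0" using SA M1 by simp
  have sbsq: "4 * sb \<le> sb\<^sup>2" using sb4 by (simp add: power2_eq_square mult_right_mono)
  have sb16: "16 \<le> sb\<^sup>2" using sb4 sbsq by linarith
  define rho where "rho = MM / SA"
  have rho1: "rho \<ge> 1" using M1 SA by (simp add: rho_def)
  have rhosb: "sb\<^sup>2 \<le> sb\<^sup>2 * rho" using mult_left_mono[OF rho1, of "sb\<^sup>2"] by simp
  have R2S1: "RR / SA = 64 * sb\<^sup>2 * rho" using RR SA by (simp add: rho_def)
  have m1: "128 / 15 * sb\<^sup>2 * rho \<le> RR / (5 * sA)"
  proof -
    have "RR / (5 * (3 / 2 * SA)) \<le> RR / (5 * sA)"
      using s1hi s1p RR M2p by (intro divide_left_mono) (auto intro: mult_pos_pos)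
    moreover have "RR / (5 * (3 / 2 * SA)) = 128 / 15 * sb\<^sup>2 * rho"
      using SA R2S1 by (simp add: field_simps)
    ultimately show ?thesis by simp
  qed
  have m2: "(Sj / SA) * RR / 32 / (2 * sj) \<le> 2 * sb\<^sup>2 * rho"
  proof -
    have "(Sj / SA) * RR / 32 / (2 * sj) = (RR / SA) / 64 * (Sj / sj)" by (simp add: field_simps)
    also have "\<dots> \<le> (RR / SA) / 64 * 2"
      using sjlo2 sjp Sj R2S1 rho1 by (intro mult_left_mono) (auto simp: field_simps)
    finally show ?thesis using R2S1 by simp
  qed
  have m3: "Sj * RR / (256 * MM) / (2 * sj) \<le> sb\<^sup>2 / 4"
  proof -
    have "Sj * RR / (256 * MM) / (2 * sj) = sb\<^sup>2 / 8 * (Sj / sj)" using M2p RR by (simp add: field_simps)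
    also have "\<dots> \<le> sb\<^sup>2 / 8 * 2"
      using sjlo2 sjp Sj by (intro mult_left_mono) (auto simp: field_simps)
    finally show ?thesis by simp
  qed
  have decomp: "YA / (2 * sA) - Yj / (2 * sj) \<ge> a / (2 * sA) - a / (2 * sj) + (RR / (5 * sA) - (Sj / SA) * RR / 32 / (2 * sj) - Sj * RR / (256 * MM) / (2 * sj))"
  proof -
    have "(a + 2 * RR / 5) / (2 * sA) \<le> YA / (2 * sA)" using YA s1p by (simp add: divide_right_mono)
    moreover have "Yj / (2 * sj) \<le> (a + (Sj / SA) * RR / 32 + Sj * RR / (256 * MM)) / (2 * sj)" using Yj sjp by (simp add: divide_right_mono)
    moreover have "(a + 2 * RR / 5) / (2 * sA) = a / (2 * sA) + RR / (5 * sA)" using s1p by (simp add: field_simps)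
    moreover have "(a + (Sj / SA) * RR / 32 + Sj * RR / (256 * MM)) / (2 * sj) = a / (2 * sj) + (Sj / SA) * RR / 32 / (2 * sj) + Sj * RR / (256 * MM) / (2 * sj)"
      using sjp by (simp add: add_divide_distrib)
    ultimately show ?thesis by linarith
  qed
  have main: "RR / (5 * sA) - (Sj / SA) * RR / 32 / (2 * sj) - Sj * RR / (256 * MM) / (2 * sj) \<ge> 13 / 2 * sb\<^sup>2 * rho - sb\<^sup>2 / 4"
  proof -
    have "sb\<^sup>2 * rho \<ge> 0" using rho1 by simp
    then show ?thesis using m1 m2 m3 by (simp add: algebra_simps)
  qed
  define t where "t = sj / sA"
  define A where "A = a / sj"
  have tp: "t > 0" using s1p sjp by (simp add: t_def)
  have Qeq: "a / (2 * sA) - a / (2 * sj) + d * ln sA / 2 - d * ln sj / 2 = A / 2 * (t - 1) - d / 2 * ln t"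
    using s1p sjp by (simp add: t_def A_def ln_div field_simps)
  define h0 where "h0 = 1 / 2 + 2 * sb"
  have Alo: "A \<ge> d - sd * h0"
  proof (cases "d - 2 * sb * sd \<ge> 0")
    case True
    have "Sj / sj \<ge> 1 - e"
    proof -
      have "(1 - e) * sj \<le> (1 - e) * ((1 + e) * Sj)" using sjhi e2 by (intro mult_left_mono) auto
      also have "\<dots> \<le> Sj" using Sj e0 by (simp add: algebra_simps)
      finally show ?thesis using sjp by (simp add: field_simps)
    qed
    have "A \<ge> (Sj / sj) * (d - 2 * sb * sd)"
    proof -
      have "(Sj / sj) * (d - 2 * sb * sd) = (Sj * (d - 2 * sb * sd)) / sj" by simp
      also have "\<dots> \<le> a / sj" using alo sjp by (intro divide_right_mono) auto
      finally show ?thesis by (simp add: A_def)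
    qed
    moreover have "(Sj / sj) * (d - 2 * sb * sd) \<ge> (1 - e) * (d - 2 * sb * sd)"
      using True \<open>Sj / sj \<ge> 1 - e\<close> by (intro mult_right_mono) auto
    moreover have "(1 - e) * (d - 2 * sb * sd) \<ge> d - sd * h0"
    proof -
      have "(1 - e) * (d - 2 * sb * sd) = d - e * d - 2 * sb * sd + e * (2 * sb * sd)" by (simp add: algebra_simps)
      moreover have "e * (2 * sb * sd) \<ge> 0" using e0 sb4 sd1 by simp
      ultimately show ?thesis using ed by (simp add: h0_def algebra_simps)
    qed
    ultimately show ?thesis by linarith
  next
    case False
    have "A \<ge> 0" using a0 sjp by (simp add: A_def)
    moreover have "d - sd * h0 \<le> 0" using False sd1 by (simp add: h0_def algebra_simps)
    ultimately show ?thesis by linarith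
  qed
  have Ahi: "A \<le> (d + 2 * sb * sd + 2 * sb\<^sup>2) / (1 - e)"
  proof -
    have p: "1 - e > 0" using e2 by simp
    have "a \<le> Sj * (d + 2 * sb * sd + 2 * sb\<^sup>2)" by (rule ahi)
    also have "Sj \<le> sj / (1 - e)" using sjlo p by (simp add: field_simps)
    then have "Sj * (d + 2 * sb * sd + 2 * sb\<^sup>2) \<le> sj / (1 - e) * (d + 2 * sb * sd + 2 * sb\<^sup>2)"
      using sb4 sd1 dsd by (intro mult_right_mono) auto
    finally show ?thesis using sjp p by (simp add: A_def field_simps)
  qed
  have Qb: "A / 2 * (t - 1) - d / 2 * ln t \<ge> sb\<^sup>2 - (13 / 2 * sb\<^sup>2 * rho - sb\<^sup>2 / 4)"
  proof (cases "t \<ge> 1")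
    case True
    have lnt: "ln t \<le> t / 2 - 1 / (2 * t)" by (rule ln_up_aux0[OF True])
    have d0: "d \<ge> 0" using dsd by simp
    have "A / 2 * (t - 1) - d / 2 * ln t \<ge> (d - sd * h0) / 2 * (t - 1) - d / 2 * (t / 2 - 1 / (2 * t))"
    proof -
      have "A / 2 * (t - 1) \<ge> (d - sd * h0) / 2 * (t - 1)" using Alo True by (intro mult_right_mono) auto
      moreover have "d / 2 * ln t \<le> d / 2 * (t / 2 - 1 / (2 * t))" using lnt d0 by (intro mult_left_mono) auto
      ultimately show ?thesis by linarith
    qed
    moreover have "(d - sd * h0) / 2 * (t - 1) - d / 2 * (t / 2 - 1 / (2 * t)) = (sd * (t - 1) - t * h0)\<^sup>2 / (4 * t) - t * h0\<^sup>2 / 4"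
      using tp dsd by (simp add: field_simps power2_eq_square)
    moreover have "(sd * (t - 1) - t * h0)\<^sup>2 / (4 * t) \<ge> 0" using tp by simp
    moreover have "t \<le> 3 * rho"
    proof -
      have "t \<le> (3 / 2 * Sj) / (SA / 2)"
      proof -
        have "sj \<le> 3 / 2 * Sj" using sjc eSj by (auto simp: abs_le_iff)
        then have "sj / sA \<le> (3 / 2 * Sj) / sA" using s1p by (intro divide_right_mono) auto
        also have "\<dots> \<le> (3 / 2 * Sj) / (SA / 2)" using s1lo SA Sj by (intro divide_left_mono) auto
        finally show ?thesis by (simp add: t_def)
      qed
      also have "\<dots> = 3 * (Sj / SA)" by simp
      also have "\<dots> \<le> 3 * rho" using Mj SA by (simp add: rho_def divide_right_mono)
      finally show ?thesis .
    qed
    then have "t * h0\<^sup>2 / 4 \<le> 3 * rho * h0\<^sup>2 / 4" by (simp add: mult_right_mono divide_right_mono)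
    moreover have "3 * rho * h0\<^sup>2 / 4 \<le> 13 / 2 * sb\<^sup>2 * rho - sb\<^sup>2 / 4 - sb\<^sup>2"
    proof -
      have h0sq: "h0\<^sup>2 = 1 / 4 + 2 * sb + 4 * sb\<^sup>2" by (simp add: h0_def power2_eq_square algebra_simps)
      have "3 * h0\<^sup>2 / 4 \<le> 13 / 2 * sb\<^sup>2 - 5 / 4 * sb\<^sup>2"
        unfolding h0sq using sbsq sb16 by (simp add: algebra_simps add_divide_distrib)
      then have "rho * (3 * h0\<^sup>2 / 4) \<le> rho * (13 / 2 * sb\<^sup>2 - 5 / 4 * sb\<^sup>2)" using rho1 by (intro mult_left_mono) auto
      moreover have "rho * (5 / 4 * sb\<^sup>2) \<ge> 5 / 4 * sb\<^sup>2" using rhosb by (simp add: algebra_simps)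
      ultimately show ?thesis by (simp add: algebra_simps)
    qed
    ultimately show ?thesis by linarith
  next
    case False
    define u where "u = 1 - t"
    have u0: "0 < u" and u1: "u < 1" using False tp by (auto simp: u_def)
    have lnt: "ln t \<le> - u - u\<^sup>2 / 2" using ln_1m[of u] u0 u1 by (simp add: u_def)
    have d0: "d \<ge> 0" using dsd by simp
    have Q1: "A / 2 * (t - 1) - d / 2 * ln t \<ge> u / 2 * (d - A) + d * u\<^sup>2 / 4"
    proof -
      have "d / 2 * ln t \<le> d / 2 * (- u - u\<^sup>2 / 2)" using lnt d0 by (intro mult_left_mono) auto
      moreover have "A / 2 * (t - 1) - d / 2 * (- u - u\<^sup>2 / 2) = u / 2 * (d - A) + d * u\<^sup>2 / 4"
        by (simp add: u_def field_simps power2_eq_square)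
      ultimately show ?thesis by linarith
    qed
    have dA: "d - A \<ge> - ((sd * h0 + 2 * sb\<^sup>2) / (1 - e))"
    proof -
      have p: "1 - e > 0" using e2 by simp
      have "d - (d + 2 * sb * sd + 2 * sb\<^sup>2) / (1 - e) = - ((e * d + 2 * sb * sd + 2 * sb\<^sup>2) / (1 - e))"
        using p by (simp add: field_simps)
      also have "e * d + 2 * sb * sd + 2 * sb\<^sup>2 = sd * h0 + 2 * sb\<^sup>2" using ed by (simp add: h0_def algebra_simps)
      finally show ?thesis using Ahi by linarith
    qed
    have Xp: "sd * h0 + 2 * sb\<^sup>2 \<ge> 0" using sd1 sb4 by (simp add: h0_def)
    show ?thesis
    proof (cases "sd \<ge> 2")
      case True
      have e4: "e \<le> 1/4"
      proof -
        have "e * 4 \<le> e * (2 * sd)" using e0 True by (intro mult_left_mono) auto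
        also have "e * (2 * sd) = 1" using e sd1 by simp
        finally show ?thesis by simp
      qed
      have "1 / (1 - e) \<le> 4 / 3" (is "_ \<le> ?c") using e4 e0 by (simp add: field_simps)
      then have "(sd * h0 + 2 * sb\<^sup>2) / (1 - e) \<le> 4 / 3 * (sd * h0 + 2 * sb\<^sup>2)"
      proof -
        have "(sd * h0 + 2 * sb\<^sup>2) / (1 - e) = (sd * h0 + 2 * sb\<^sup>2) * (1 / (1 - e))" by simp
        also have "\<dots> \<le> (sd * h0 + 2 * sb\<^sup>2) * ?c" using Xp \<open>1 / (1 - e) \<le> ?c\<close> by (rule mult_left_mono[rotated])
        finally show ?thesis by (simp add: algebra_simps)
      qed
      then have dA2: "d - A \<ge> - (4 / 3 * (sd * h0 + 2 * sb\<^sup>2))" using dA by (smt (verit))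
      have "u / 2 * (d - A) \<ge> u / 2 * (- (4 / 3 * (sd * h0 + 2 * sb\<^sup>2)))" using dA2 u0 by (intro mult_left_mono) auto
      moreover have "u / 2 * (- (4 / 3 * (sd * h0 + 2 * sb\<^sup>2))) + d * u\<^sup>2 / 4
           = (sd * u / 2 - 2 / 3 * h0)\<^sup>2 - 4 / 9 * h0\<^sup>2 - 4 / 3 * u * sb\<^sup>2"
        using dsd by (simp add: power2_eq_square algebra_simps)
      moreover have "4 / 3 * u * sb\<^sup>2 \<le> 4 / 3 * sb\<^sup>2"
      proof -
        have "u * sb\<^sup>2 \<le> sb\<^sup>2" using u1 u0 by (intro mult_left_le_one_le) auto
        then show ?thesis by simp
      qed
      moreover have "4 / 9 * h0\<^sup>2 + 4 / 3 * sb\<^sup>2 \<le> 13 / 2 * sb\<^sup>2 * rho - sb\<^sup>2 / 4 - sb\<^sup>2"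
      proof -
        have h0sq: "h0\<^sup>2 = 1 / 4 + 2 * sb + 4 * sb\<^sup>2" by (simp add: h0_def power2_eq_square algebra_simps)
        have "sb\<^sup>2 * rho \<ge> sb\<^sup>2" using rhosb by simp
        moreover have "4 / 9 * h0\<^sup>2 + 4 / 3 * sb\<^sup>2 \<le> 13 / 2 * sb\<^sup>2 - sb\<^sup>2 / 4 - sb\<^sup>2"
          unfolding h0sq using sbsq sb16 by (simp add: algebra_simps add_divide_distrib)
        ultimately show ?thesis by linarith
      qed
      moreover have "(sd * u / 2 - 2 / 3 * h0)\<^sup>2 \<ge> 0" by simp
      ultimately show ?thesis using Q1 by linarith
    next
      case False
      have "1 / (1 - e) \<le> 2" (is "_ \<le> ?c") using e2 e0 by (simp add: field_simps)
      then have "(sd * h0 + 2 * sb\<^sup>2) / (1 - e) \<le> 2 * (sd * h0 + 2 * sb\<^sup>2)"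
      proof -
        have "(sd * h0 + 2 * sb\<^sup>2) / (1 - e) = (sd * h0 + 2 * sb\<^sup>2) * (1 / (1 - e))" by simp
        also have "\<dots> \<le> (sd * h0 + 2 * sb\<^sup>2) * ?c" using Xp \<open>1 / (1 - e) \<le> ?c\<close> by (rule mult_left_mono[rotated])
        finally show ?thesis by (simp add: algebra_simps)
      qed
      moreover have "sd * h0 \<le> 2 * h0" using False sb4 by (intro mult_right_mono) (auto simp: h0_def)
      ultimately have dA2: "d - A \<ge> - (2 * (2 * h0 + 2 * sb\<^sup>2))" using dA by (smt (verit))
      have "u / 2 * (d - A) \<ge> u / 2 * (- (2 * (2 * h0 + 2 * sb\<^sup>2)))" using dA2 u0 by (intro mult_left_mono) auto
      moreover have "u / 2 * (- (2 * (2 * h0 + 2 * sb\<^sup>2))) \<ge> - (2 * h0 + 2 * sb\<^sup>2)"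
      proof -
        have "u * (2 * h0 + 2 * sb\<^sup>2) \<le> 2 * h0 + 2 * sb\<^sup>2"
          using u1 u0 Xp sb4 by (intro mult_left_le_one_le) (auto simp: h0_def)
        then show ?thesis by (simp add: algebra_simps)
      qed
      moreover have "d * u\<^sup>2 / 4 \<ge> 0" using d0 by simp
      moreover have "2 * h0 + 2 * sb\<^sup>2 \<le> 13 / 2 * sb\<^sup>2 * rho - sb\<^sup>2 / 4 - sb\<^sup>2"
      proof -
        have "sb\<^sup>2 * rho \<ge> sb\<^sup>2" using rhosb by simp
        moreover have "2 * h0 + 2 * sb\<^sup>2 \<le> 13 / 2 * sb\<^sup>2 - sb\<^sup>2 / 4 - sb\<^sup>2"
          unfolding h0_def using sbsq sb16 by (simp add: algebra_simps add_divide_distrib)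
        ultimately show ?thesis by linarith
      qed
      ultimately show ?thesis using Q1 by linarith
    qed
  qed
  show ?thesis using decomp main Qb Qeq by linarith
qed


lemma weight_bound:
  fixes p s :: "nat \<Rightarrow> real" and m :: "nat \<Rightarrow> 'a::euclidean_space"
  assumes j: "j \<in> {1..k}" and p: "\<forall>i\<in>{1..k}. p i > 0"
    and key: "\<beta> \<le> (norm (X - m 1))\<^sup>2 / (2 * (s 1)\<^sup>2) + real DIM('a) * ln ((s 1)\<^sup>2) / 2
                 - (norm (X - m j))\<^sup>2 / (2 * (s j)\<^sup>2) - real DIM('a) * ln ((s j)\<^sup>2) / 2"
    and k1: "1 \<in> {1..k}"
  shows "estep_weight k p m s 1 X \<le> p 1 / p j * exp (- \<beta>)"
proof -
  define g where "g l = - (norm (X - m l))\<^sup>2 / (2 * (s l)\<^sup>2) - real DIM('a) * ln ((s l)\<^sup>2) / 2" for l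
  define T where "T l = p l * exp (g l)" for l
  have Tpos: "\<forall>l\<in>{1..k}. T l > 0" using p by (simp add: T_def)
  have Tj: "T j \<le> (\<Sum>l\<in>{1..k}. T l)"
    by (rule member_le_sum) (use Tpos j in \<open>auto intro: less_imp_le\<close>)
  have "estep_weight k p m s 1 X = T 1 / (\<Sum>l\<in>{1..k}. T l)"
    unfolding estep_weight_def T_def g_def by simp
  also have "\<dots> \<le> T 1 / T j"
  proof -
    have Tjp: "T j > 0" using Tpos j by auto
    have sp: "(\<Sum>l\<in>{1..k}. T l) > 0" using Tj Tjp by linarith
    have T1: "T 1 \<ge> 0" using Tpos k1 by (auto intro: less_imp_le)
    show ?thesis using T1 Tj sp Tjp by (intro divide_left_mono) auto
  qed
  also have "T 1 / T j = p 1 / p j * exp (g 1 - g j)"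
    by (simp add: T_def exp_diff)
  also have "\<dots> \<le> p 1 / p j * exp (- \<beta>)"
  proof -
    have "g 1 - g j \<le> - \<beta>" using key by (simp add: g_def)
    then show ?thesis using p j k1 by (intro mult_left_mono) (auto intro: less_imp_le)
  qed
  finally show ?thesis .
qed

lemma weight_core:
  fixes mu1 muj m1 mj X :: "'a::euclidean_space" and sig1 sigj s1 sj R M \<beta> :: real
  assumes sig1: "sig1 > 0" and sigj: "sigj > 0" and M: "M = max sig1 sigj"
    and R: "R = norm (muj - mu1)" and \<beta>: "\<beta> = R\<^sup>2 / (64 * M\<^sup>2)" and \<beta>16: "\<beta> \<ge> 16"
    and s1c: "\<bar>s1\<^sup>2 - sig1\<^sup>2\<bar> \<le> 0.5 * sig1\<^sup>2 / sqrt (real DIM('a))"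
    and sjc: "\<bar>sj\<^sup>2 - sigj\<^sup>2\<bar> \<le> 0.5 * sigj\<^sup>2 / sqrt (real DIM('a))"
    and D1: "norm (mu1 - m1) \<le> sig1 / 16 * (R / M)" and Dj: "norm (muj - mj) \<le> sigj / 16 * (R / M)"
    and E1: "- R\<^sup>2 / 5 \<le> inner (X - muj) (muj - mu1)"
    and E2: "- R\<^sup>2 / 64 \<le> inner (X - muj) (mu1 - m1)"
    and E3: "inner (X - muj) (muj - mj) \<le> (sigj / sig1)\<^sup>2 * R\<^sup>2 / 64"
    and E4: "real DIM('a) * (1 - 2 * sqrt (\<beta> / real DIM('a))) \<le> (norm (X - muj))\<^sup>2 / sigj\<^sup>2"
    and E5: "(norm (X - muj))\<^sup>2 / sigj\<^sup>2 \<le> real DIM('a) * (1 + 2 * sqrt (\<beta> / real DIM('a)) + 2 * \<beta> / real DIM('a))"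
  shows "\<beta> \<le> (norm (X - m1))\<^sup>2 / (2 * s1\<^sup>2) + real DIM('a) * ln (s1\<^sup>2) / 2
            - (norm (X - mj))\<^sup>2 / (2 * sj\<^sup>2) - real DIM('a) * ln (sj\<^sup>2) / 2"
proof -
  define d where "d = real DIM('a)"
  define sd where "sd = sqrt d"
  define sb where "sb = sqrt \<beta>"
  define e where "e = 1 / (2 * sd)"
  define a where "a = (norm (X - muj))\<^sup>2"
  have d1: "d \<ge> 1" by (simp add: d_def DIM_positive Suc_le_eq)
  have sd1: "sd \<ge> 1" using d1 by (simp add: sd_def)
  have dsd: "d = sd\<^sup>2" using d1 by (simp add: sd_def)
  have \<beta>0: "\<beta> \<ge> 0" using \<beta>16 by simp
  have sbsq: "sb\<^sup>2 = \<beta>" using \<beta>0 by (simp add: sb_def)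
  have sb4: "sb \<ge> 4"
  proof -
    have "sqrt 16 \<le> sqrt \<beta>" using \<beta>16 by (rule real_sqrt_le_mono)
    then show ?thesis by (simp add: sb_def)
  qed
  have Mp: "M > 0" using M sig1 by simp
  have M1: "sig1 \<le> M" and Mj: "sigj \<le> M" using M by auto
  have R2: "R\<^sup>2 = 64 * sb\<^sup>2 * M\<^sup>2" using Mp \<beta> sbsq by (simp add: field_simps)
  have q: "sqrt (\<beta> / d) = sb / sd" by (simp add: sb_def sd_def real_sqrt_divide)
  have Sj: "sigj\<^sup>2 > 0" using sigj by simp
  have alo: "sigj\<^sup>2 * (d - 2 * sb * sd) \<le> a"
  proof -
    have "d * (1 - 2 * (sb / sd)) = d - 2 * sb * sd" using sd1 dsd by (simp add: field_simps power2_eq_square)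
    then have "d - 2 * sb * sd \<le> a / sigj\<^sup>2" using E4 q by (simp add: d_def a_def)
    then show ?thesis using Sj by (simp add: field_simps)
  qed
  have ahi: "a \<le> sigj\<^sup>2 * (d + 2 * sb * sd + 2 * sb\<^sup>2)"
  proof -
    have "d * (1 + 2 * (sb / sd) + 2 * \<beta> / d) = d + 2 * sb * sd + 2 * sb\<^sup>2" using sd1 dsd sbsq by (simp add: field_simps power2_eq_square)
    then have "a / sigj\<^sup>2 \<le> d + 2 * sb * sd + 2 * sb\<^sup>2" using E5 q by (simp add: d_def a_def)
    then show ?thesis using Sj by (simp add: field_simps)
  qed
  have a0: "0 \<le> a" by (simp add: a_def)
  have RM: "R / M \<ge> 0" using Mp R by simp
  have Y1: "a + 2 * R\<^sup>2 / 5 \<le> (norm (X - m1))\<^sup>2"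
  proof -
    define v where "v = X - muj"
    define U where "U = muj - mu1"
    define D where "D = mu1 - m1"
    have "X - m1 = v + U + D" by (simp add: v_def U_def D_def)
    then have exp1: "(norm (X - m1))\<^sup>2 = (norm v)\<^sup>2 + (norm U)\<^sup>2 + (norm D)\<^sup>2 + 2 * inner v U + 2 * inner v D + 2 * inner U D"
      by (simp add: power2_norm_eq_inner inner_add_left inner_add_right inner_commute)
    have nU: "norm U = R" by (simp add: U_def R)
    have nD: "norm D \<le> R / 16"
    proof -
      have "norm D \<le> sig1 / 16 * (R / M)" using D1 by (simp add: D_def)
      also have "\<dots> \<le> M / 16 * (R / M)" using M1 RM by (intro mult_right_mono) auto
      also have "\<dots> = R / 16" using Mp by simp
      finally show ?thesis .
    qed
    have "inner U D \<ge> - (norm U * norm D)"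
      using norm_cauchy_schwarz[of "- U" D] by simp
    moreover have "norm U * norm D \<le> R * (R / 16)" unfolding nU using nD R by (intro mult_left_mono) auto
    ultimately have "inner U D \<ge> - (R\<^sup>2 / 16)" by (simp add: power2_eq_square)
    moreover have "inner v U \<ge> - R\<^sup>2 / 5" using E1 by (simp add: v_def U_def)
    moreover have "inner v D \<ge> - R\<^sup>2 / 64" using E2 by (simp add: v_def D_def)
    moreover have "(norm U)\<^sup>2 = R\<^sup>2" using nU by simp
    moreover have "(norm D)\<^sup>2 \<ge> 0" by simp
    moreover have "R\<^sup>2 \<ge> 0" by simp
    ultimately show ?thesis using exp1 unfolding a_def v_def by linarith
  qed
  have Yj: "(norm (X - mj))\<^sup>2 \<le> a + (sigj\<^sup>2 / sig1\<^sup>2) * R\<^sup>2 / 32 + sigj\<^sup>2 * R\<^sup>2 / (256 * M\<^sup>2)"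
  proof -
    define v where "v = X - muj"
    define D where "D = muj - mj"
    have "X - mj = v + D" by (simp add: v_def D_def)
    then have exp1: "(norm (X - mj))\<^sup>2 = (norm v)\<^sup>2 + 2 * inner v D + (norm D)\<^sup>2"
      by (simp add: power2_norm_eq_inner inner_add_left inner_add_right inner_commute)
    have "(norm D)\<^sup>2 \<le> (sigj / 16 * (R / M))\<^sup>2" using Dj by (simp add: D_def power_mono)
    also have "\<dots> = sigj\<^sup>2 * R\<^sup>2 / (256 * M\<^sup>2)" by (simp add: power2_eq_square)
    finally have "(norm D)\<^sup>2 \<le> sigj\<^sup>2 * R\<^sup>2 / (256 * M\<^sup>2)" .
    moreover have "2 * inner v D \<le> (sigj\<^sup>2 / sig1\<^sup>2) * R\<^sup>2 / 32" using E3 by (simp add: v_def D_def power_divide)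
    ultimately show ?thesis using exp1 unfolding a_def v_def by (smt (verit))
  qed
  have "sb\<^sup>2 \<le> (norm (X - m1))\<^sup>2 / (2 * s1\<^sup>2) + d * ln (s1\<^sup>2) / 2 - (norm (X - mj))\<^sup>2 / (2 * sj\<^sup>2) - d * ln (sj\<^sup>2) / 2"
  proof (rule core_ineq[where SA = "sig1\<^sup>2" and Sj = "sigj\<^sup>2" and MM = "M\<^sup>2" and RR = "R\<^sup>2" and a = a, OF sd1 dsd e_def])
    show "0 < sig1\<^sup>2" using sig1 by simp
    show "0 < sigj\<^sup>2" using sigj by simp
    show "sig1\<^sup>2 \<le> M\<^sup>2" using M1 sig1 by (simp add: power_mono)
    show "sigj\<^sup>2 \<le> M\<^sup>2" using Mj sigj by (simp add: power_mono)
    show "\<bar>s1\<^sup>2 - sig1\<^sup>2\<bar> \<le> e * sig1\<^sup>2" using s1c by (simp add: e_def sd_def d_def)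
    show "\<bar>sj\<^sup>2 - sigj\<^sup>2\<bar> \<le> e * sigj\<^sup>2" using sjc by (simp add: e_def sd_def d_def)
    show "R\<^sup>2 = 64 * sb\<^sup>2 * M\<^sup>2" by (rule R2)
    show "4 \<le> sb" by (rule sb4)
    show "0 \<le> a" by (rule a0)
    show "sigj\<^sup>2 * (d - 2 * sb * sd) \<le> a" by (rule alo)
    show "a \<le> sigj\<^sup>2 * (d + 2 * sb * sd + 2 * sb\<^sup>2)" by (rule ahi)
    show "a + 2 * R\<^sup>2 / 5 \<le> (norm (X - m1))\<^sup>2" by (rule Y1)
    show "(norm (X - mj))\<^sup>2 \<le> a + sigj\<^sup>2 / sig1\<^sup>2 * R\<^sup>2 / 32 + sigj\<^sup>2 * R\<^sup>2 / (256 * M\<^sup>2)" using Yj by simp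
  qed
  then show ?thesis using sbsq by (simp add: d_def)
qed


theorem lemma3p2:
  fixes k :: nat and C :: real
    and pis pie sigs sige :: "nat \<Rightarrow> real"
    and mus mue :: "nat \<Rightarrow> 'a::euclidean_space"
    and j :: nat
  assumes k2: "k \<ge> 2"
    and pis_pos: "\<forall>i\<in>{1..k}. pis i > 0"
    and pis_sum: "(\<Sum>i\<in>{1..k}. pis i) = 1"
    and sigs_pos: "\<forall>i\<in>{1..k}. sigs i > 0"
    and C64: "C \<ge> 64"
    and sep: "\<forall>i\<in>{1..k}. \<forall>l\<in>{1..k}. i \<noteq> l \<longrightarrow>
        norm (mus i - mus l) \<ge> C * max (sigs i) (sigs l) *
          sqrt (ln (real k) + ln ((Max (sigs ` {1..k}) / Min (sigs ` {1..k})) *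
                                   (Max (pis ` {1..k}) / Min (pis ` {1..k}))))"
    and mu_close: "\<forall>i\<in>{1..k}. norm (mue i - mus i) \<le>
        sigs i / 16 * Min ((\<lambda>l. norm (mus i - mus l) / max (sigs i) (sigs l)) ` ({1..k} - {i}))"
    and pi_close: "\<forall>i\<in>{1..k}. \<bar>pie i - pis i\<bar> \<le> pis i / 2"
    and sig_close: "\<forall>i\<in>{1..k}. \<bar>(sige i)\<^sup>2 - (sigs i)\<^sup>2\<bar> \<le> 0.5 * (sigs i)\<^sup>2 / sqrt (real DIM('a))"
    and j: "j \<in> {1..k}" "j \<noteq> 1"
  defines "\<beta> \<equiv> (norm (mus j - mus 1))\<^sup>2 / (64 * (max (sigs 1) (sigs j))\<^sup>2)"
    and "E \<equiv> {X. let v = X - mus j; d = real DIM('a); R = norm (mus j - mus 1);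
                 \<beta> = (norm (mus j - mus 1))\<^sup>2 / (64 * (max (sigs 1) (sigs j))\<^sup>2) in
              (- R\<^sup>2 / 5 \<le> inner v (mus j - mus 1))
            \<and> (- R\<^sup>2 / 64 \<le> inner v (mus 1 - mue 1)
               \<and> inner v (mus j - mue j) \<le> (sigs j / sigs 1)\<^sup>2 * R\<^sup>2 / 64)
            \<and> (d * (1 - 2 * sqrt (\<beta> / d)) \<le> (norm v)\<^sup>2 / (sigs j)\<^sup>2
               \<and> (norm v)\<^sup>2 / (sigs j)\<^sup>2 \<le> d * (1 + 2 * sqrt (\<beta> / d) + 2 * \<beta> / d))}"
  shows "(\<forall>X\<in>E. estep_weight k pie mue sige 1 X \<le> pie 1 / pie j * exp (- \<beta>)
               \<and> estep_weight k pis mus sigs 1 X \<le> pis 1 / pis j * exp (- \<beta>))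
       \<and> measure (gauss_iso (mus j) (sigs j)) E \<ge> 1 - 5 * exp (- \<beta>)"
  proof -
  define d where "d = real DIM('a)"
  have d1: "d \<ge> 1" by (simp add: d_def DIM_positive Suc_le_eq)
  have k1: "1 \<in> {1..k}" using k2 by simp
  have jk: "j \<in> {1..k}" and j1: "j \<noteq> 1" using j by auto
  have sig1: "sigs 1 > 0" using sigs_pos k1 by auto
  have sigj: "sigs j > 0" using sigs_pos jk by auto
  define R where "R = norm (mus j - mus 1)"
  define M where "M = max (sigs 1) (sigs j)"
  have Mp: "M > 0" using sig1 by (simp add: M_def)
  have M1: "sigs 1 \<le> M" and Mj: "sigs j \<le> M" by (auto simp: M_def)
  have \<beta>eq: "\<beta> = R\<^sup>2 / (64 * M\<^sup>2)" using assms(12) by (simp add: R_def M_def)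
  have \<beta>16: "\<beta> \<ge> 16"
  proof -
    define L where "L = ln (real k) + ln ((Max (sigs ` {1..k}) / Min (sigs ` {1..k})) *
                                   (Max (pis ` {1..k}) / Min (pis ` {1..k})))"
    have sepj: "R \<ge> C * max (sigs j) (sigs 1) * sqrt L"
      using sep jk k1 j1 by (auto simp: R_def L_def)
    have fin: "finite {1..k}" and ne: "{1..k} \<noteq> {}" using k1 by auto
    have r1: "Max (sigs ` {1..k}) / Min (sigs ` {1..k}) \<ge> 1"
    proof -
      have "Min (sigs ` {1..k}) \<in> sigs ` {1..k}" using fin ne by (intro Min_in) auto
      then have mp: "Min (sigs ` {1..k}) > 0" using sigs_pos by auto
      have "Min (sigs ` {1..k}) \<le> sigs 1" using fin k1 by (intro Min_le) auto
      also have "sigs 1 \<le> Max (sigs ` {1..k})" using fin k1 by (intro Max_ge) auto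
      finally show ?thesis using mp by simp
    qed
    have r2: "Max (pis ` {1..k}) / Min (pis ` {1..k}) \<ge> 1"
    proof -
      have "Min (pis ` {1..k}) \<in> pis ` {1..k}" using fin ne by (intro Min_in) auto
      then have mp: "Min (pis ` {1..k}) > 0" using pis_pos by auto
      have "Min (pis ` {1..k}) \<le> pis 1" using fin k1 by (intro Min_le) auto
      also have "pis 1 \<le> Max (pis ` {1..k})" using fin k1 by (intro Max_ge) auto
      finally show ?thesis using mp by simp
    qed
    have "ln (2::real) \<le> ln (real k)" using k2 by simp
    moreover have "0 \<le> ln ((Max (sigs ` {1..k}) / Min (sigs ` {1..k})) * (Max (pis ` {1..k}) / Min (pis ` {1..k})))"
    proof (rule ln_ge_zero)
      show "1 \<le> (Max (sigs ` {1..k}) / Min (sigs ` {1..k})) * (Max (pis ` {1..k}) / Min (pis ` {1..k}))"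
        using mult_mono[OF r1 r2] r1 by (simp only: mult_1_left)
    qed
    ultimately have L2: "L \<ge> ln 2" by (simp add: L_def)
    have ln2: "ln (2::real) \<ge> 1 / 4" using ln2_ge_two_thirds by simp
    have sL: "sqrt L \<ge> 1 / 2"
    proof -
      have "sqrt (1 / 4) \<le> sqrt L" using L2 ln2 by (intro real_sqrt_le_mono) simp
      moreover have "sqrt (1 / 4 :: real) = 1 / 2" by (simp add: real_sqrt_divide)
      ultimately show ?thesis by simp
    qed
    have "32 * M \<le> C * M * sqrt L"
    proof -
      have "32 * M = 64 * M * (1 / 2)" by simp
      also have "\<dots> \<le> C * M * sqrt L"
        using C64 Mp sL by (intro mult_mono) auto
      finally show ?thesis .
    qed
    then have RM: "32 * M \<le> R" using sepj by (simp add: M_def max.commute)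
    then have "(32 * M)\<^sup>2 \<le> R\<^sup>2" using Mp by (intro power_mono) auto
    then have "1024 * M\<^sup>2 \<le> R\<^sup>2" by (simp add: power2_eq_square)
    then show ?thesis using Mp unfolding \<beta>eq by (simp add: field_simps)
  qed
  have Rp: "R > 0"
  proof -
    have "R\<^sup>2 = \<beta> * (64 * M\<^sup>2)" using Mp \<beta>eq by simp
    then have "R\<^sup>2 > 0" using \<beta>16 Mp by simp
    moreover have "R \<ge> 0" by (simp add: R_def)
    ultimately show ?thesis by (simp add: zero_less_power2) 
  qed
  have D1: "norm (mus 1 - mue 1) \<le> sigs 1 / 16 * (R / M)"
  proof -
    have "Min ((\<lambda>l. norm (mus 1 - mus l) / max (sigs 1) (sigs l)) ` ({1..k} - {1})) \<le> norm (mus 1 - mus j) / max (sigs 1) (sigs j)"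
      using jk j1 by (intro Min_le) auto
    also have "\<dots> = R / M" by (simp add: R_def M_def norm_minus_commute)
    finally have "sigs 1 / 16 * Min ((\<lambda>l. norm (mus 1 - mus l) / max (sigs 1) (sigs l)) ` ({1..k} - {1})) \<le> sigs 1 / 16 * (R / M)"
      using sig1 by (intro mult_left_mono) auto
    moreover have "norm (mue 1 - mus 1) \<le> sigs 1 / 16 * Min ((\<lambda>l. norm (mus 1 - mus l) / max (sigs 1) (sigs l)) ` ({1..k} - {1}))"
      using mu_close k1 by blast
    ultimately have "norm (mue 1 - mus 1) \<le> sigs 1 / 16 * (R / M)" by (rule order_trans[rotated])
    then show ?thesis by (simp only: norm_minus_commute)
  qed
  have Dj: "norm (mus j - mue j) \<le> sigs j / 16 * (R / M)"
  proof -
    have "Min ((\<lambda>l. norm (mus j - mus l) / max (sigs j) (sigs l)) ` ({1..k} - {j})) \<le> norm (mus j - mus 1) / max (sigs j) (sigs 1)"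
      using k1 j1 by (intro Min_le) auto
    also have "\<dots> = R / M" by (simp add: R_def M_def max.commute)
    finally have "sigs j / 16 * Min ((\<lambda>l. norm (mus j - mus l) / max (sigs j) (sigs l)) ` ({1..k} - {j})) \<le> sigs j / 16 * (R / M)"
      using sigj by (intro mult_left_mono) auto
    moreover have "norm (mue j - mus j) \<le> sigs j / 16 * Min ((\<lambda>l. norm (mus j - mus l) / max (sigs j) (sigs l)) ` ({1..k} - {j}))"
      using mu_close jk by blast
    ultimately have "norm (mue j - mus j) \<le> sigs j / 16 * (R / M)" by (rule order_trans[rotated])
    then show ?thesis by (simp only: norm_minus_commute)
  qed
  have RM0: "R / M \<ge> 0" using Rp Mp by simp
  have memE: "X \<in> E \<longleftrightarrow>
      (- R\<^sup>2 / 5 \<le> inner (X - mus j) (mus j - mus 1))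
    \<and> (- R\<^sup>2 / 64 \<le> inner (X - mus j) (mus 1 - mue 1)
       \<and> inner (X - mus j) (mus j - mue j) \<le> (sigs j / sigs 1)\<^sup>2 * R\<^sup>2 / 64)
    \<and> (d * (1 - 2 * sqrt (\<beta> / d)) \<le> (norm (X - mus j))\<^sup>2 / (sigs j)\<^sup>2
       \<and> (norm (X - mus j))\<^sup>2 / (sigs j)\<^sup>2 \<le> d * (1 + 2 * sqrt (\<beta> / d) + 2 * \<beta> / d))" for X
    using assms(13) assms(12) by (simp add: Let_def R_def d_def)
  have part1: "\<forall>X\<in>E. estep_weight k pie mue sige 1 X \<le> pie 1 / pie j * exp (- \<beta>)
               \<and> estep_weight k pis mus sigs 1 X \<le> pis 1 / pis j * exp (- \<beta>)"
  proof
    fix X assume XE: "X \<in> E"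
    note c = XE[unfolded memE]
    have E1: "- R\<^sup>2 / 5 \<le> inner (X - mus j) (mus j - mus 1)" using c by blast
    have E2: "- R\<^sup>2 / 64 \<le> inner (X - mus j) (mus 1 - mue 1)" using c by blast
    have E3: "inner (X - mus j) (mus j - mue j) \<le> (sigs j / sigs 1)\<^sup>2 * R\<^sup>2 / 64" using c by blast
    have E4: "real DIM('a) * (1 - 2 * sqrt (\<beta> / real DIM('a))) \<le> (norm (X - mus j))\<^sup>2 / (sigs j)\<^sup>2" using c by (simp add: d_def)
    have E5: "(norm (X - mus j))\<^sup>2 / (sigs j)\<^sup>2 \<le> real DIM('a) * (1 + 2 * sqrt (\<beta> / real DIM('a)) + 2 * \<beta> / real DIM('a))" using c by (simp add: d_def)
    have pie_pos: "\<forall>i\<in>{1..k}. pie i > 0"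
    proof
      fix i assume i: "i \<in> {1..k}"
      then have "\<bar>pie i - pis i\<bar> \<le> pis i / 2" "pis i > 0" using pi_close pis_pos by auto
      moreover have "pis i - pie i \<le> \<bar>pie i - pis i\<bar>" by linarith
      ultimately show "pie i > 0" by linarith
    qed
    have w1: "estep_weight k pie mue sige 1 X \<le> pie 1 / pie j * exp (- \<beta>)"
    proof (rule weight_bound[OF jk pie_pos _ k1])
      show "\<beta> \<le> (norm (X - mue 1))\<^sup>2 / (2 * (sige 1)\<^sup>2) + real DIM('a) * ln ((sige 1)\<^sup>2) / 2 -
          (norm (X - mue j))\<^sup>2 / (2 * (sige j)\<^sup>2) - real DIM('a) * ln ((sige j)\<^sup>2) / 2"
        by (rule weight_core[OF sig1 sigj M_def R_def \<beta>eq \<beta>16 _ _ D1 Dj E1 E2 E3 E4 E5])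
           (use sig_close k1 jk in auto)
    qed
    have w2: "estep_weight k pis mus sigs 1 X \<le> pis 1 / pis j * exp (- \<beta>)"
    proof (rule weight_bound[OF jk pis_pos _ k1])
      have z1: "- R\<^sup>2 / 64 \<le> inner (X - mus j) (mus 1 - mus 1)" by simp
      have z2: "inner (X - mus j) (mus j - mus j) \<le> (sigs j / sigs 1)\<^sup>2 * R\<^sup>2 / 64" by simp
      have z3: "norm (mus 1 - mus 1) \<le> sigs 1 / 16 * (R / M)" using mult_nonneg_nonneg[of "sigs 1 / 16" "R / M"] sig1 RM0 by simp
      have z4: "norm (mus j - mus j) \<le> sigs j / 16 * (R / M)" using mult_nonneg_nonneg[of "sigs j / 16" "R / M"] sigj RM0 by simp
      show "\<beta> \<le> (norm (X - mus 1))\<^sup>2 / (2 * (sigs 1)\<^sup>2) + real DIM('a) * ln ((sigs 1)\<^sup>2) / 2 -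
          (norm (X - mus j))\<^sup>2 / (2 * (sigs j)\<^sup>2) - real DIM('a) * ln ((sigs j)\<^sup>2) / 2"
        by (rule weight_core[OF sig1 sigj M_def R_def \<beta>eq \<beta>16 _ _ z3 z4 E1 z1 z2 E4 E5]) auto
    qed
    show "estep_weight k pie mue sige 1 X \<le> pie 1 / pie j * exp (- \<beta>)
               \<and> estep_weight k pis mus sigs 1 X \<le> pis 1 / pis j * exp (- \<beta>)" using w1 w2 by blast
  qed
  define N where "N = gauss_iso (mus j) (sigs j)"
  interpret N: prob_space N unfolding N_def by (rule gauss_prob[OF sigj])
  define q where "q = sqrt (\<beta> / d)"
  have q0: "q \<ge> 0" using \<beta>16 d1 by (simp add: q_def)
  have qsq: "q\<^sup>2 = \<beta> / d" using \<beta>16 d1 by (simp add: q_def)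
  have dq: "d * q\<^sup>2 = \<beta>" using qsq d1 by simp
  define B1 where "B1 = {x. R\<^sup>2 / 5 \<le> inner (x - mus j) (mus 1 - mus j)}"
  define B2 where "B2 = {x. R\<^sup>2 / 64 \<le> inner (x - mus j) (mue 1 - mus 1)}"
  define B3 where "B3 = {x. (sigs j / sigs 1)\<^sup>2 * R\<^sup>2 / 64 \<le> inner (x - mus j) (mus j - mue j)}"
  define B4 where "B4 = {x. (norm (x - mus j))\<^sup>2 / (sigs j)\<^sup>2 < real DIM('a) * (1 - 2 * q)}"
  define B5 where "B5 = {x. real DIM('a) * (1 + 2 * q + 2 * q\<^sup>2) < (norm (x - mus j))\<^sup>2 / (sigs j)\<^sup>2}"
  have sub: "space N - E \<subseteq> B1 \<union> B2 \<union> B3 \<union> B4 \<union> B5"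
  proof
    fix x assume "x \<in> space N - E"
    then have nE: "x \<notin> E" by simp
    have i1: "inner (x - mus j) (mus 1 - mus j) = - inner (x - mus j) (mus j - mus 1)"
      by (simp add: inner_diff_right)
    have i2: "inner (x - mus j) (mue 1 - mus 1) = - inner (x - mus j) (mus 1 - mue 1)"
      by (simp add: inner_diff_right)
    have e5: "d * (1 + 2 * sqrt (\<beta> / d) + 2 * \<beta> / d) = real DIM('a) * (1 + 2 * q + 2 * q\<^sup>2)"
      using qsq by (simp add: q_def d_def)
    have nc: "\<not> ((- R\<^sup>2 / 5 \<le> inner (x - mus j) (mus j - mus 1))
    \<and> (- R\<^sup>2 / 64 \<le> inner (x - mus j) (mus 1 - mue 1)
       \<and> inner (x - mus j) (mus j - mue j) \<le> (sigs j / sigs 1)\<^sup>2 * R\<^sup>2 / 64)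
    \<and> (d * (1 - 2 * sqrt (\<beta> / d)) \<le> (norm (x - mus j))\<^sup>2 / (sigs j)\<^sup>2
       \<and> (norm (x - mus j))\<^sup>2 / (sigs j)\<^sup>2 \<le> d * (1 + 2 * sqrt (\<beta> / d) + 2 * \<beta> / d)))"
      using nE memE[of x] by blast
    then consider (c1) "\<not> (- R\<^sup>2 / 5 \<le> inner (x - mus j) (mus j - mus 1))"
      | (c2) "\<not> (- R\<^sup>2 / 64 \<le> inner (x - mus j) (mus 1 - mue 1))"
      | (c3) "\<not> (inner (x - mus j) (mus j - mue j) \<le> (sigs j / sigs 1)\<^sup>2 * R\<^sup>2 / 64)"
      | (c4) "\<not> (d * (1 - 2 * sqrt (\<beta> / d)) \<le> (norm (x - mus j))\<^sup>2 / (sigs j)\<^sup>2)"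
      | (c5) "\<not> ((norm (x - mus j))\<^sup>2 / (sigs j)\<^sup>2 \<le> d * (1 + 2 * sqrt (\<beta> / d) + 2 * \<beta> / d))"
      by blast
    then show "x \<in> B1 \<union> B2 \<union> B3 \<union> B4 \<union> B5"
    proof cases
      case c1
      then have "R\<^sup>2 / 5 \<le> inner (x - mus j) (mus 1 - mus j)" unfolding i1 by linarith
      then show ?thesis by (simp add: B1_def)
    next
      case c2
      then have "R\<^sup>2 / 64 \<le> inner (x - mus j) (mue 1 - mus 1)" unfolding i2 by linarith
      then show ?thesis by (simp add: B2_def)
    next
      case c3
      then have "(sigs j / sigs 1)\<^sup>2 * R\<^sup>2 / 64 \<le> inner (x - mus j) (mus j - mue j)" by linarith
      then show ?thesis by (simp add: B3_def)
    next
      case c4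
      then have "(norm (x - mus j))\<^sup>2 / (sigs j)\<^sup>2 < real DIM('a) * (1 - 2 * q)" by (simp add: q_def d_def)
      then show ?thesis by (simp add: B4_def)
    next
      case c5
      then have "real DIM('a) * (1 + 2 * q + 2 * q\<^sup>2) < (norm (x - mus j))\<^sup>2 / (sigs j)\<^sup>2" using e5 by linarith
      then show ?thesis by (simp add: B5_def)
    qed
  qed
  have meas: "B1 \<in> sets N" "B2 \<in> sets N" "B3 \<in> sets N" "B4 \<in> sets N" "B5 \<in> sets N"
    unfolding N_def B1_def B2_def B3_def B4_def B5_def by measurable
  have Emeas: "E \<in> sets N"
  proof -
    have "E = {X. let v = X - mus j; d = real DIM('a); R = norm (mus j - mus 1);
                 \<beta> = (norm (mus j - mus 1))\<^sup>2 / (64 * (max (sigs 1) (sigs j))\<^sup>2) in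
              (- R\<^sup>2 / 5 \<le> inner v (mus j - mus 1))
            \<and> (- R\<^sup>2 / 64 \<le> inner v (mus 1 - mue 1)
               \<and> inner v (mus j - mue j) \<le> (sigs j / sigs 1)\<^sup>2 * R\<^sup>2 / 64)
            \<and> (d * (1 - 2 * sqrt (\<beta> / d)) \<le> (norm v)\<^sup>2 / (sigs j)\<^sup>2
               \<and> (norm v)\<^sup>2 / (sigs j)\<^sup>2 \<le> d * (1 + 2 * sqrt (\<beta> / d) + 2 * \<beta> / d))}"
      using assms(13) by simp
    also have "\<dots> \<in> sets N" unfolding N_def Let_def by measurable
    finally show ?thesis .
  qed
  have Sp: "(sigs 1)\<^sup>2 > 0" "(sigs j)\<^sup>2 > 0" "M\<^sup>2 > 0" using sig1 sigj Mp by auto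
  have SM: "(sigs 1)\<^sup>2 \<le> M\<^sup>2" "(sigs j)\<^sup>2 \<le> M\<^sup>2" using M1 Mj sig1 sigj by (auto intro: power_mono)
  have \<beta>alt: "\<beta> = R\<^sup>2 * M\<^sup>2 / (64 * (M\<^sup>2 * M\<^sup>2))" using \<beta>eq Mp by (simp add: field_simps power2_eq_square)
  have cmp: "\<beta> \<le> R\<^sup>2 * M\<^sup>2 / (32 * P)" if P: "P > 0" "P \<le> 2 * (M\<^sup>2 * M\<^sup>2)" for P
  proof -
    have "R\<^sup>2 * M\<^sup>2 / (64 * (M\<^sup>2 * M\<^sup>2)) \<le> R\<^sup>2 * M\<^sup>2 / (32 * P)"
      using P Sp by (intro divide_left_mono) auto
    then show ?thesis using \<beta>alt by simp
  qed
  have b1: "measure N B1 \<le> exp (- \<beta>)"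
  proof -
    have "measure N B1 \<le> exp (- (R\<^sup>2 / 5)\<^sup>2 / (2 * (sigs j)\<^sup>2 * R\<^sup>2))"
      unfolding N_def B1_def by (rule P_lin[OF sigj Rp]) (use Rp in \<open>auto simp: R_def norm_minus_commute\<close>)
    also have "\<dots> \<le> exp (- \<beta>)"
    proof -
      have eq: "(R\<^sup>2 / 5)\<^sup>2 / (2 * (sigs j)\<^sup>2 * R\<^sup>2) = R\<^sup>2 * M\<^sup>2 / (32 * ((sigs j)\<^sup>2 * M\<^sup>2 * (25 / 16)))"
        using Rp Mp sigj by (simp add: field_simps power2_eq_square)
      have "(sigs j)\<^sup>2 * M\<^sup>2 * (25 / 16) \<le> 2 * (M\<^sup>2 * M\<^sup>2)"
      proof -
        have "(sigs j)\<^sup>2 * M\<^sup>2 * (25 / 16) \<le> M\<^sup>2 * M\<^sup>2 * (25 / 16)" using SM Sp by (intro mult_right_mono) auto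
        also have "\<dots> \<le> M\<^sup>2 * M\<^sup>2 * 2" using Sp by (intro mult_left_mono) auto
        finally show ?thesis by simp
      qed
      moreover have "(sigs j)\<^sup>2 * M\<^sup>2 * (25 / 16) > 0" using Sp by simp
      ultimately have "\<beta> \<le> (R\<^sup>2 / 5)\<^sup>2 / (2 * (sigs j)\<^sup>2 * R\<^sup>2)" unfolding eq by (intro cmp)
      then show ?thesis by simp
    qed
    finally show ?thesis .
  qed
  have U1p: "sigs 1 / 16 * (R / M) > 0" using sig1 Rp Mp by simp
  have Ujp: "sigs j / 16 * (R / M) > 0" using sigj Rp Mp by simp
  have b2: "measure N B2 \<le> exp (- \<beta>)"
  proof -
    have "measure N B2 \<le> exp (- (R\<^sup>2 / 64)\<^sup>2 / (2 * (sigs j)\<^sup>2 * (sigs 1 / 16 * (R / M))\<^sup>2))"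
      unfolding N_def B2_def by (rule P_lin[OF sigj U1p]) (use D1 Rp in \<open>auto simp: norm_minus_commute\<close>)
    also have "\<dots> \<le> exp (- \<beta>)"
    proof -
      have eq: "(R\<^sup>2 / 64)\<^sup>2 / (2 * (sigs j)\<^sup>2 * (sigs 1 / 16 * (R / M))\<^sup>2) = R\<^sup>2 * M\<^sup>2 / (32 * ((sigs j)\<^sup>2 * (sigs 1)\<^sup>2))"
        using Rp Mp sigj sig1 by (simp add: field_simps power2_eq_square)
      have "(sigs j)\<^sup>2 * (sigs 1)\<^sup>2 \<le> M\<^sup>2 * M\<^sup>2" using SM Sp by (intro mult_mono) auto
      then have "(sigs j)\<^sup>2 * (sigs 1)\<^sup>2 \<le> 2 * (M\<^sup>2 * M\<^sup>2)" using mult_nonneg_nonneg[OF zero_le_power2[of M] zero_le_power2[of M]] by linarith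
      moreover have "(sigs j)\<^sup>2 * (sigs 1)\<^sup>2 > 0" using Sp by simp
      ultimately have "\<beta> \<le> (R\<^sup>2 / 64)\<^sup>2 / (2 * (sigs j)\<^sup>2 * (sigs 1 / 16 * (R / M))\<^sup>2)" unfolding eq by (intro cmp)
      then show ?thesis by simp
    qed
    finally show ?thesis .
  qed
  have b3: "measure N B3 \<le> exp (- \<beta>)"
  proof -
    have tp: "(sigs j / sigs 1)\<^sup>2 * R\<^sup>2 / 64 > 0" using sigj sig1 Rp by simp
    have "measure N B3 \<le> exp (- ((sigs j / sigs 1)\<^sup>2 * R\<^sup>2 / 64)\<^sup>2 / (2 * (sigs j)\<^sup>2 * (sigs j / 16 * (R / M))\<^sup>2))"
      unfolding N_def B3_def by (rule P_lin[OF sigj Ujp Dj tp])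
    also have "\<dots> \<le> exp (- \<beta>)"
    proof -
      have eq: "((sigs j / sigs 1)\<^sup>2 * R\<^sup>2 / 64)\<^sup>2 / (2 * (sigs j)\<^sup>2 * (sigs j / 16 * (R / M))\<^sup>2) = R\<^sup>2 * M\<^sup>2 / (32 * ((sigs 1)\<^sup>2 * (sigs 1)\<^sup>2))"
        using Rp Mp sigj sig1 by (simp add: field_simps power2_eq_square)
      have "(sigs 1)\<^sup>2 * (sigs 1)\<^sup>2 \<le> M\<^sup>2 * M\<^sup>2" using SM Sp by (intro mult_mono) auto
      then have "(sigs 1)\<^sup>2 * (sigs 1)\<^sup>2 \<le> 2 * (M\<^sup>2 * M\<^sup>2)" using mult_nonneg_nonneg[OF zero_le_power2[of M] zero_le_power2[of M]] by linarith
      moreover have "(sigs 1)\<^sup>2 * (sigs 1)\<^sup>2 > 0" using Sp by simp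
      ultimately have "\<beta> \<le> ((sigs j / sigs 1)\<^sup>2 * R\<^sup>2 / 64)\<^sup>2 / (2 * (sigs j)\<^sup>2 * (sigs j / 16 * (R / M))\<^sup>2)" unfolding eq by (intro cmp)
      then show ?thesis by simp
    qed
    finally show ?thesis .
  qed
  have b4: "measure N B4 \<le> exp (- \<beta>)"
    using P_low[OF sigj q0, of "mus j"] dq unfolding N_def B4_def d_def by simp
  have b5: "measure N B5 \<le> exp (- \<beta>)"
    using P_up[OF sigj q0, of "mus j"] dq unfolding N_def B5_def d_def by simp
  have "measure N (space N - E) \<le> measure N (B1 \<union> B2 \<union> B3 \<union> B4 \<union> B5)"
    using sub meas by (intro N.finite_measure_mono) auto
  also have "\<dots> \<le> measure N B1 + measure N B2 + measure N B3 + measure N B4 + measure N B5"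
    using meas by (smt (verit) measure_Un_le sets.Un)
  also have "\<dots> \<le> 5 * exp (- \<beta>)" using b1 b2 b3 b4 b5 by simp
  finally have "measure N (space N - E) \<le> 5 * exp (- \<beta>)" .
  moreover have "measure N (space N - E) = 1 - measure N E" using N.prob_compl[OF Emeas] .
  ultimately have part2: "measure N E \<ge> 1 - 5 * exp (- \<beta>)" by simp
  show ?thesis using part1 part2 by (simp add: N_def)
qed

end
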